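(* Let $N\ge 1$ and let $\{(X_t,Y_t)\}_{t\ge0}$ be the continuous-time Maki--Thompson (MT) rumor process on the state space $S'=\{(x,y)\in\mathbb{Z}^2: 0\le x\le N,\ 0\le y\le N+1-x\}$, with transient set $S=S'\setminus\Delta$ and absorbing set $\Delta=\{(x,0): 0\le x\le N-1\}$, and absorption time $\tau_\Delta=\inf\{t>0: Y_t=0\}$. Then the process has a unique quasi-stationary distribution on $S$, namely $\nu=\delta_{(0,1)}$, the point mass at $(0,1)$. Moreover, for every probability distribution $\mu$ on $S$, $$\lim_{t\to\infty} P_\mu(X_t=x,\,Y_t=y \mid \tau_\Delta>t)=\nu(x,y)\quad\text{for all }(x,y)\in S,$$ i.e. $\delta_{(0,1)}$ is the Yaglom limit (quasi-limiting distribution) for every initial distribution on $S$.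
   Context: MT model: population of size $N+1$; $X_t$, $Y_t$ are the numbers of ignorants and spreaders at time $t$ (stiflers $Z_t=N+1-X_t-Y_t$). It is the continuous-time Markov chain on $S'$ whose only transitions from a state $(X,Y)$ are $(X,Y)\to(X-1,Y+1)$ at rate $XY$ and $(X,Y)\to(X,Y-1)$ at rate $Y(N-X)$ (so the total rate out of $(X,Y)$ is $NY$). For a probability measure $\nu$ on $S$, $P_\nu$ denotes the law of the chain started with initial distribution $\nu$. A probability measure $\nu$ on $S$ is a quasi-stationary distribution (QSD) if $P_\nu(X_t\in A\mid \tau_\Delta>t)=\nu(A)$ for all $t\ge0$ and all $A\subset S$ (here $X_t$ stands for the state $(X_t,Y_t)$). *)

theory Defs
  imports "HOL-Analysis.Analysis" "HOL-Probability.Probability_Mass_Function"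
begin

type_synonym state = "nat \<times> nat"

definition MT_space :: "nat \<Rightarrow> state set" where
  "MT_space N = {(x, y). x \<le> N \<and> y \<le> N + 1 - x}"

text \<open>Absorbing set: states with no spreaders (Y = 0).\<close>
definition MT_absorbing :: "nat \<Rightarrow> state set" where
  "MT_absorbing N = {s \<in> MT_space N. snd s = 0}"

definition MT_transient :: "nat \<Rightarrow> state set" where
  "MT_transient N = MT_space N - MT_absorbing N"

definition MT_gen :: "nat \<Rightarrow> state \<Rightarrow> state \<Rightarrow> real" where
  "MT_gen N s s' = (case s of (x, y) \<Rightarrow>
      if s' = (x, y) then - (real N * real y)
      else if 1 \<le> x \<and> s' = (x - 1, y + 1) then real x * real y
      else if 1 \<le> y \<and> s' = (x, y - 1) then real y * (real N - real x)
      else 0)"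

fun MT_gen_pow :: "nat \<Rightarrow> nat \<Rightarrow> state \<Rightarrow> state \<Rightarrow> real" where
  "MT_gen_pow N 0 s s' = (if s = s' then 1 else 0)"
| "MT_gen_pow N (Suc n) s s' = (\<Sum>u\<in>MT_space N. MT_gen_pow N n s u * MT_gen N u s')"

definition MT_trans :: "nat \<Rightarrow> real \<Rightarrow> state \<Rightarrow> state \<Rightarrow> real" where
  "MT_trans N t s s' = (\<Sum>n. t ^ n / fact n * MT_gen_pow N n s s')"

definition MT_dist :: "nat \<Rightarrow> state pmf \<Rightarrow> real \<Rightarrow> state \<Rightarrow> real" where
  "MT_dist N \<mu> t s = (\<Sum>u\<in>MT_space N. pmf \<mu> u * MT_trans N t u s)"

text \<open>P_mu(tau_Delta > t) = P_mu(X_t in S), since Delta is absorbing.\<close>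
definition MT_surv :: "nat \<Rightarrow> state pmf \<Rightarrow> real \<Rightarrow> real" where
  "MT_surv N \<mu> t = (\<Sum>s\<in>MT_transient N. MT_dist N \<mu> t s)"

definition MT_cond :: "nat \<Rightarrow> state pmf \<Rightarrow> real \<Rightarrow> state set \<Rightarrow> real" where
  "MT_cond N \<mu> t A = (\<Sum>s\<in>A. MT_dist N \<mu> t s) / MT_surv N \<mu> t"

definition MT_QSD :: "nat \<Rightarrow> state pmf \<Rightarrow> bool" where
  "MT_QSD N \<nu> \<longleftrightarrow> set_pmf \<nu> \<subseteq> MT_transient N \<and>
     (\<forall>t\<ge>0. \<forall>A\<subseteq>MT_transient N. MT_cond N \<nu> t A = measure_pmf.prob \<nu> A)"

end

theory Submission
  imports Defs
begin

lemma space_finite: "finite (MT_space N)"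
proof -
  have "MT_space N \<subseteq> {0..N} \<times> {0..N+1}" unfolding MT_space_def by auto
  thus ?thesis by (rule finite_subset) auto
qed

lemma gen_bound:
  assumes "u \<in> MT_space N"
  shows "\<bar>MT_gen N u v\<bar> \<le> 2 * (real N + 1)^2"
proof -
  obtain x y where u: "u = (x,y)" by (cases u)
  have x: "x \<le> N" and y: "y \<le> N + 1" using assms u unfolding MT_space_def by auto
  have rx: "real x \<le> real N" and ry: "real y \<le> real N + 1" using x y by auto
  have c0: "real N * (real N + 1) \<le> 2 * (real N + 1)^2" by (simp add: power2_eq_square)
  have "real N * real y \<le> real N * (real N + 1)" using ry by (intro mult_left_mono) auto
  hence b1: "real N * real y \<le> 2 * (real N + 1)^2" using c0 by linarith
  have "real x * real y \<le> real N * (real N + 1)" using rx ry by (intro mult_mono) auto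
  hence b2: "real x * real y \<le> 2 * (real N + 1)^2" using c0 by linarith
  have b3: "real y * (real N - real x) \<le> 2 * (real N + 1)^2"
  proof -
    have "real N - real x \<le> real N" by simp
    have "real y * (real N - real x) \<le> (real N + 1) * real N"
      using mult_mono[OF ry \<open>real N - real x \<le> real N\<close>] rx by simp
    also have "\<dots> \<le> 2 * (real N + 1)^2" by (simp add: power2_eq_square)
    finally show ?thesis .
  qed
  have b3': "0 \<le> real y * (real N - real x)" using rx by simp
  show ?thesis unfolding MT_gen_def u using b1 b2 b3 b3' by (auto split: if_splits)
qed

definition Kc :: "nat \<Rightarrow> real" where
  "Kc N = real (card (MT_space N)) * (2 * (real N + 1)^2)"

lemma Kc_nonneg: "0 \<le> Kc N" unfolding Kc_def by simp

lemma pow_bound: "\<bar>MT_gen_pow N n s s'\<bar> \<le> Kc N ^ n"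
proof (induction n arbitrary: s')
  case 0 then show ?case by simp
next
  case (Suc n)
  have "\<bar>MT_gen_pow N (Suc n) s s'\<bar> \<le> (\<Sum>u\<in>MT_space N. \<bar>MT_gen_pow N n s u * MT_gen N u s'\<bar>)"
    unfolding MT_gen_pow.simps(2) by (rule sum_abs)
  also have "\<dots> \<le> (\<Sum>u\<in>MT_space N. Kc N ^ n * (2 * (real N + 1)^2))"
  proof (rule sum_mono)
    fix u assume "u \<in> MT_space N"
    thus "\<bar>MT_gen_pow N n s u * MT_gen N u s'\<bar> \<le> Kc N ^ n * (2 * (real N + 1)^2)"
      unfolding abs_mult using Suc gen_bound[of u N s'] Kc_nonneg[of N] by (intro mult_mono) auto
  qed
  also have "\<dots> = Kc N ^ Suc n" unfolding Kc_def by simp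
  finally show ?case .
qed

definition cf :: "nat \<Rightarrow> state \<Rightarrow> state \<Rightarrow> nat \<Rightarrow> real" where
  "cf N s s' n = MT_gen_pow N n s s' / fact n"

lemma trans_eq: "MT_trans N t s s' = (\<Sum>n. cf N s s' n * t ^ n)"
  unfolding MT_trans_def cf_def by (simp add: field_simps)

lemma cf_summable: "summable (\<lambda>n. cf N s s' n * t ^ n)"
proof (rule summable_comparison_test)
  show "summable (\<lambda>n. inverse (fact n) * (Kc N * \<bar>t\<bar>) ^ n)" by (rule summable_exp)
  show "\<exists>M. \<forall>n\<ge>M. norm (cf N s s' n * t ^ n) \<le> inverse (fact n) * (Kc N * \<bar>t\<bar>) ^ n"
  proof (intro exI allI impI)
    fix n :: nat
    have "norm (cf N s s' n * t ^ n) = \<bar>MT_gen_pow N n s s'\<bar> * inverse (fact n) * \<bar>t\<bar>^n"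
      unfolding cf_def by (simp add: abs_mult power_abs divide_inverse)
    also have "\<dots> \<le> Kc N ^ n * inverse (fact n) * \<bar>t\<bar>^n"
      by (intro mult_right_mono pow_bound) auto
    finally show "norm (cf N s s' n * t ^ n) \<le> inverse (fact n) * (Kc N * \<bar>t\<bar>) ^ n"
      by (simp add: power_mult_distrib mult_ac)
  qed
qed

lemma diffs_cf: "diffs (cf N s s') n = (\<Sum>u\<in>MT_space N. cf N s u n * MT_gen N u s')"
  unfolding diffs_def cf_def
  by (simp add: sum_divide_distrib[symmetric] field_simps del: of_nat_Suc)

lemma trans_deriv:
  "((\<lambda>t. MT_trans N t s s') has_real_derivative
      (\<Sum>u\<in>MT_space N. MT_trans N t s u * MT_gen N u s')) (at t)"
proof -
  have "((\<lambda>t. \<Sum>n. cf N s s' n * t ^ n) has_real_derivative (\<Sum>n. diffs (cf N s s') n * t ^ n)) (at t)"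
    by (rule termdiffs_strong_converges_everywhere) (rule cf_summable)
  moreover have "(\<Sum>n. diffs (cf N s s') n * t ^ n) = (\<Sum>u\<in>MT_space N. MT_trans N t s u * MT_gen N u s')"
  proof -
    have "(\<Sum>n. diffs (cf N s s') n * t ^ n) = (\<Sum>n. \<Sum>u\<in>MT_space N. cf N s u n * t ^ n * MT_gen N u s')"
      unfolding diffs_cf by (simp add: sum_distrib_left sum_distrib_right mult_ac)
    also have "\<dots> = (\<Sum>u\<in>MT_space N. \<Sum>n. cf N s u n * t ^ n * MT_gen N u s')"
      by (rule suminf_sum) (intro summable_mult2 cf_summable)
    also have "\<dots> = (\<Sum>u\<in>MT_space N. MT_trans N t s u * MT_gen N u s')"
      unfolding trans_eq by (intro sum.cong refl suminf_mult2[symmetric] cf_summable)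
    finally show ?thesis .
  qed
  ultimately show ?thesis unfolding trans_eq by simp
qed

lemma trans_zero: "MT_trans N 0 s s' = (if s = s' then 1 else 0)"
proof -
  have "MT_trans N 0 s s' = (\<Sum>n. cf N s s' n * 0 ^ n)" by (rule trans_eq)
  also have "\<dots> = cf N s s' 0" by (rule powser_zero)
  finally show ?thesis unfolding cf_def by simp
qed

lemma dist_deriv:
  "((\<lambda>t. MT_dist N \<mu> t s') has_real_derivative
      (\<Sum>w\<in>MT_space N. MT_dist N \<mu> t w * MT_gen N w s')) (at t)"
proof -
  have "((\<lambda>t. MT_dist N \<mu> t s') has_real_derivative
      (\<Sum>u\<in>MT_space N. pmf \<mu> u * (\<Sum>w\<in>MT_space N. MT_trans N t u w * MT_gen N w s'))) (at t)"
    unfolding MT_dist_def by (intro DERIV_sum DERIV_cmult trans_deriv)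
  also have "(\<Sum>u\<in>MT_space N. pmf \<mu> u * (\<Sum>w\<in>MT_space N. MT_trans N t u w * MT_gen N w s'))
     = (\<Sum>w\<in>MT_space N. MT_dist N \<mu> t w * MT_gen N w s')"
    unfolding MT_dist_def sum_distrib_left sum_distrib_right
    by (subst sum.swap) (simp add: mult_ac)
  finally show ?thesis .
qed

lemma dist_zero: "s \<in> MT_space N \<Longrightarrow> MT_dist N \<mu> 0 s = pmf \<mu> s"
  unfolding MT_dist_def trans_zero using space_finite
  by (simp add: if_distrib cong: if_cong)

lemma gen_col:
  "MT_gen N w (x,y) =
     (if w = (x,y) then - (real N * real y) else 0)
   + (if w = (x+1, y-1) \<and> 1 \<le> y then real (x+1) * real (y-1) else 0)
   + (if w = (x, y+1) then real (y+1) * (real N - real x) else 0)"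
proof (cases w)
  case (Pair a b)
  show ?thesis unfolding Pair MT_gen_def
    by (cases "a = x+1"; cases "b+1 = y"; cases "b = y+1"; cases "a = x"; auto)
qed

lemma inflow_sum:
  assumes "(x,y) \<in> MT_space N"
  shows "(\<Sum>w\<in>MT_space N. f w * MT_gen N w (x,y)) =
     - (real N * real y) * f (x,y)
   + (if 2 \<le> y \<and> (x+1, y-1) \<in> MT_space N then real (x+1) * real (y-1) * f (x+1,y-1) else 0)
   + (if (x, y+1) \<in> MT_space N then real (y+1) * (real N - real x) * f (x,y+1) else 0)"
proof -
  have "(\<Sum>w\<in>MT_space N. f w * MT_gen N w (x,y)) =
      (\<Sum>w\<in>MT_space N. (if w = (x,y) then - (real N * real y) * f w else 0))
    + (\<Sum>w\<in>MT_space N. (if w = (x+1, y-1) \<and> 1 \<le> y then real (x+1) * real (y-1) * f w else 0))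
    + (\<Sum>w\<in>MT_space N. (if w = (x, y+1) then real (y+1) * (real N - real x) * f w else 0))"
    unfolding gen_col sum.distrib[symmetric] by (intro sum.cong refl) (auto simp: algebra_simps)
  also have "\<dots> = - (real N * real y) * f (x,y)
   + (if 1 \<le> y \<and> (x+1, y-1) \<in> MT_space N then real (x+1) * real (y-1) * f (x+1,y-1) else 0)
   + (if (x, y+1) \<in> MT_space N then real (y+1) * (real N - real x) * f (x,y+1) else 0)"
  proof -
    have m: "(\<Sum>w\<in>MT_space N. (if w = (x+1, y-1) \<and> 1 \<le> y then real (x+1) * real (y-1) * f w else 0))
      = (if 1 \<le> y \<and> (x+1, y-1) \<in> MT_space N then real (x+1) * real (y-1) * f (x+1,y-1) else 0)"
    proof (cases "1 \<le> y")
      case True then show ?thesis using space_finite[of N] by (simp add: sum.delta')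
    qed simp
    show ?thesis unfolding m using space_finite[of N] assms by (simp add: sum.delta')
  qed
  also have "(if 1 \<le> y \<and> (x+1, y-1) \<in> MT_space N then real (x+1) * real (y-1) * f (x+1,y-1) else 0)
     = (if 2 \<le> y \<and> (x+1, y-1) \<in> MT_space N then real (x+1) * real (y-1) * f (x+1,y-1) else 0)"
    by (cases "y = 1") auto
  finally show ?thesis .
qed

lemma trans_iff: "(x,y) \<in> MT_transient N \<longleftrightarrow> x \<le> N \<and> 1 \<le> y \<and> y \<le> N + 1 - x"
  unfolding MT_transient_def MT_absorbing_def MT_space_def by auto

lemma space_iff: "(x,y) \<in> MT_space N \<longleftrightarrow> x \<le> N \<and> y \<le> N + 1 - x"
  unfolding MT_space_def by auto

lemma transient_sub: "MT_transient N \<subseteq> MT_space N"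
  unfolding MT_transient_def by auto

lemma transient_finite: "finite (MT_transient N)"
  using space_finite finite_subset[OF transient_sub] by blast

lemma S_induct:
  assumes step: "\<And>x y. (x,y) \<in> MT_transient N \<Longrightarrow>
      (\<And>x' y'. (x',y') \<in> MT_transient N \<Longrightarrow> 2*x+y < 2*x'+y' \<Longrightarrow> P x' y') \<Longrightarrow> P x y"
  shows "(x,y) \<in> MT_transient N \<Longrightarrow> P x y"
proof (induction "2*N+2-(2*x+y)" arbitrary: x y rule: less_induct)
  case less
  show ?case
  proof (rule step[OF less.prems])
    fix x' y' assume a: "(x',y') \<in> MT_transient N" "2*x+y < 2*x'+y'"
    have "2*x'+y' \<le> 2*N+1" using a(1) unfolding trans_iff by auto
    hence "2*N+2-(2*x'+y') < 2*N+2-(2*x+y)" using a(2) by auto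
    thus "P x' y'" using less.hyps a(1) by blast
  qed
qed

lemma cmp:
  fixes f g f' g' :: "real \<Rightarrow> real"
  assumes "T \<le> t"
    and df: "\<And>\<tau>. T \<le> \<tau> \<Longrightarrow> (f has_real_derivative f' \<tau>) (at \<tau>)"
    and dg: "\<And>\<tau>. T \<le> \<tau> \<Longrightarrow> (g has_real_derivative g' \<tau>) (at \<tau>)"
    and le: "\<And>\<tau>. T \<le> \<tau> \<Longrightarrow> f' \<tau> + c * f \<tau> \<le> g' \<tau> + c * g \<tau>"
    and init: "f T \<le> g T"
  shows "f t \<le> g t"
proof -
  define \<phi> where "\<phi> = (\<lambda>\<tau>. exp (c * \<tau>) * (g \<tau> - f \<tau>))"
  have "\<phi> T \<le> \<phi> t"
  proof (rule DERIV_nonneg_imp_nondecreasing[OF assms(1)])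
    fix \<tau> assume "T \<le> \<tau>" "\<tau> \<le> t"
    have "(\<phi> has_real_derivative (exp (c * \<tau>) * c * (g \<tau> - f \<tau>) + exp (c * \<tau>) * (g' \<tau> - f' \<tau>))) (at \<tau>)"
      unfolding \<phi>_def
      by (auto intro!: derivative_eq_intros df dg \<open>T \<le> \<tau>\<close>)
    moreover have "0 \<le> exp (c * \<tau>) * c * (g \<tau> - f \<tau>) + exp (c * \<tau>) * (g' \<tau> - f' \<tau>)"
    proof -
      have "exp (c * \<tau>) * c * (g \<tau> - f \<tau>) + exp (c * \<tau>) * (g' \<tau> - f' \<tau>)
          = exp (c * \<tau>) * ((g' \<tau> + c * g \<tau>) - (f' \<tau> + c * f \<tau>))" by (simp add: algebra_simps)
      thus ?thesis using le[OF \<open>T \<le> \<tau>\<close>] by simp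
    qed
    ultimately show "\<exists>y. (\<phi> has_real_derivative y) (at \<tau>) \<and> 0 \<le> y" by blast
  qed
  moreover have "0 \<le> \<phi> T" unfolding \<phi>_def using init by simp
  ultimately have "0 \<le> exp (c * t) * (g t - f t)" unfolding \<phi>_def by linarith
  thus ?thesis by (simp add: zero_le_mult_iff)
qed

definition hh :: "nat \<Rightarrow> state pmf \<Rightarrow> state \<Rightarrow> real \<Rightarrow> real" where
  "hh N \<mu> s t = exp (real N * t) * MT_dist N \<mu> t s"

definition inw :: "nat \<Rightarrow> state pmf \<Rightarrow> nat \<Rightarrow> nat \<Rightarrow> real \<Rightarrow> real" where
  "inw N \<mu> x y t =
     (if 2 \<le> y \<and> (x+1, y-1) \<in> MT_space N then real (x+1) * real (y-1) * hh N \<mu> (x+1,y-1) t else 0)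
   + (if (x, y+1) \<in> MT_space N then real (y+1) * (real N - real x) * hh N \<mu> (x,y+1) t else 0)"

lemma h_deriv:
  assumes "(x,y) \<in> MT_space N"
  shows "(hh N \<mu> (x,y) has_real_derivative
     (- (real N * (real y - 1)) * hh N \<mu> (x,y) t + inw N \<mu> x y t)) (at t)"
proof -
  have "(hh N \<mu> (x,y) has_real_derivative
      exp (real N * t) * real N * MT_dist N \<mu> t (x,y) +
      exp (real N * t) * (\<Sum>w\<in>MT_space N. MT_dist N \<mu> t w * MT_gen N w (x,y))) (at t)"
    unfolding hh_def[abs_def] by (auto intro!: derivative_eq_intros dist_deriv)
  also have "exp (real N * t) * (\<Sum>w\<in>MT_space N. MT_dist N \<mu> t w * MT_gen N w (x,y))
     = (\<Sum>w\<in>MT_space N. hh N \<mu> w t * MT_gen N w (x,y))"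
    unfolding hh_def sum_distrib_left by (simp add: mult_ac)
  also have "\<dots> = - (real N * real y) * hh N \<mu> (x,y) t + inw N \<mu> x y t"
    unfolding inflow_sum[OF assms] inw_def by simp
  also have "exp (real N * t) * real N * MT_dist N \<mu> t (x,y) + (- (real N * real y) * hh N \<mu> (x,y) t + inw N \<mu> x y t)
     = - (real N * (real y - 1)) * hh N \<mu> (x,y) t + inw N \<mu> x y t"
    unfolding hh_def by (simp add: algebra_simps)
  finally show ?thesis .
qed

lemma hh_zero: "s \<in> MT_space N \<Longrightarrow> hh N \<mu> s 0 = pmf \<mu> s"
  unfolding hh_def by (simp add: dist_zero)

lemma pow01:
  assumes "s \<in> MT_space N" "s \<noteq> (0,0)"
  shows "MT_gen_pow N n (0,1) s = (if s = (0,1) then (- real N)^n else 0)"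
  using assms
proof (induction n arbitrary: s)
  case 0 then show ?case by simp
next
  case (Suc n)
  have "MT_gen_pow N (Suc n) (0,1) s = (\<Sum>u\<in>MT_space N. (if u = (0,1) then (- real N)^n * MT_gen N (0,1) s else 0))"
    unfolding MT_gen_pow.simps
  proof (intro sum.cong refl)
    fix u assume u: "u \<in> MT_space N"
    show "MT_gen_pow N n (0, 1) u * MT_gen N u s = (if u = (0, 1) then (- real N) ^ n * MT_gen N (0, 1) s else 0)"
    proof (cases "u = (0,0)")
      case True
      then show ?thesis using Suc.prems unfolding MT_gen_def by auto
    next
      case False
      then show ?thesis using Suc.IH[OF u False] by auto
    qed
  qed
  also have "\<dots> = (- real N)^n * MT_gen N (0,1) s"
    using space_finite[of N] by (simp add: sum.delta' space_iff)
  also have "\<dots> = (if s = (0,1) then (- real N)^Suc n else 0)"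
    using Suc.prems unfolding MT_gen_def by (auto split: prod.splits)
  finally show ?case .
qed

lemma trans01:
  assumes "s \<in> MT_space N" "s \<noteq> (0,0)"
  shows "MT_trans N t (0,1) s = (if s = (0,1) then exp (- (real N * t)) else 0)"
proof -
  have "MT_trans N t (0,1) s = (\<Sum>n. t ^ n / fact n * (if s = (0,1) then (- real N)^n else 0))"
    unfolding MT_trans_def pow01[OF assms] ..
  also have "\<dots> = (if s = (0,1) then (\<Sum>n. (- (real N * t))^n /\<^sub>R fact n) else 0)"
  proof -
    have "\<And>n. t ^ n / fact n * (- real N)^n = (- (real N * t))^n /\<^sub>R fact n"
    proof -
      fix n
      have "(- (real N * t))^n = (- real N)^n * t^n" by (metis minus_mult_left power_mult_distrib)
      thus "t ^ n / fact n * (- real N)^n = (- (real N * t))^n /\<^sub>R fact n" by (simp add: field_simps)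
    qed
    thus ?thesis by simp
  qed
  also have "\<dots> = (if s = (0,1) then exp (- (real N * t)) else 0)"
    by (simp add: exp_def)
  finally show ?thesis .
qed

lemma one_in_S: "N \<ge> 1 \<Longrightarrow> (0,1) \<in> MT_transient N"
  unfolding trans_iff by auto

lemma dist01:
  assumes "N \<ge> 1" "s \<in> MT_transient N"
  shows "MT_dist N (return_pmf (0,1)) t s = (if s = (0,1) then exp (- (real N * t)) else 0)"
proof -
  have s: "s \<in> MT_space N" "s \<noteq> (0,0)" using assms(2) transient_sub[of N]
    by (auto simp: MT_transient_def MT_absorbing_def)
  have "MT_dist N (return_pmf (0,1)) t s = (\<Sum>u\<in>MT_space N. (if u = (0,1) then MT_trans N t (0,1) s else 0))"
    unfolding MT_dist_def pmf_return by (intro sum.cong refl) auto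
  also have "\<dots> = MT_trans N t (0,1) s"
    using space_finite[of N] one_in_S[OF assms(1)] transient_sub[of N] by (auto simp: sum.delta')
  finally show ?thesis using trans01[OF s] by simp
qed

lemma surv01:
  assumes "N \<ge> 1"
  shows "MT_surv N (return_pmf (0,1)) t = exp (- (real N * t))"
  unfolding MT_surv_def using dist01[OF assms] transient_finite[of N] one_in_S[OF assms]
  by (simp add: sum.delta' cong: sum.cong)

lemma QSD01:
  assumes "N \<ge> 1"
  shows "MT_QSD N (return_pmf (0,1))"
  unfolding MT_QSD_def
proof (intro conjI allI impI)
  show "set_pmf (return_pmf (0, 1)) \<subseteq> MT_transient N" using one_in_S[OF assms] by simp
  fix t :: real and A assume "0 \<le> t" "A \<subseteq> MT_transient N"
  have fA: "finite A" using \<open>A \<subseteq> _\<close> transient_finite finite_subset by blast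
  have "(\<Sum>s\<in>A. MT_dist N (return_pmf (0, 1)) t s) = (\<Sum>s\<in>A. if s = (0,1) then exp (- (real N * t)) else 0)"
  proof (intro sum.cong refl)
    fix s assume "s \<in> A"
    hence "s \<in> MT_transient N" using \<open>A \<subseteq> _\<close> by blast
    thus "MT_dist N (return_pmf (0, 1)) t s = (if s = (0,1) then exp (- (real N * t)) else 0)"
      by (rule dist01[OF assms])
  qed
  also have "\<dots> = (if (0,1) \<in> A then exp (- (real N * t)) else 0)"
    using fA by (simp add: sum.delta')
  finally show "MT_cond N (return_pmf (0, 1)) t A = measure_pmf.prob (return_pmf (0, 1)) A"
    unfolding MT_cond_def surv01[OF assms] measure_return_pmf by simp
qed

lemma deriv_eq_right:
  fixes f g :: "real \<Rightarrow> real"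
  assumes "(f has_real_derivative d1) (at 0)" "(g has_real_derivative d2) (at 0)"
    and "\<And>t. 0 \<le> t \<Longrightarrow> f t = g t"
  shows "d1 = d2"
proof -
  have l1: "((\<lambda>h. (f (0 + h) - f 0) / h) \<longlongrightarrow> d1) (at_right 0)"
    using assms(1) unfolding DERIV_def by (rule tendsto_mono[OF at_le[OF subset_UNIV]])
  have l2: "((\<lambda>h. (g (0 + h) - g 0) / h) \<longlongrightarrow> d2) (at_right 0)"
    using assms(2) unfolding DERIV_def by (rule tendsto_mono[OF at_le[OF subset_UNIV]])
  have ev: "\<forall>\<^sub>F h in at_right 0. (g (0 + h) - g 0) / h = (f (0 + h) - f 0) / h"
    by (rule eventually_at_rightI[of 0 1]) (auto simp: assms(3))
  have l2': "((\<lambda>h. (f (0 + h) - f 0) / h) \<longlongrightarrow> d2) (at_right 0)"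
    using tendsto_cong[OF ev] l2 by blast
  show ?thesis using tendsto_unique[OF trivial_limit_at_right_real l1 l2'] .
qed

lemma QSD_eigen:
  assumes "N \<ge> 1" "MT_QSD N \<nu>"
  obtains \<theta> where "\<And>s. s \<in> MT_transient N \<Longrightarrow>
      (\<Sum>w\<in>MT_space N. pmf \<nu> w * MT_gen N w s) = pmf \<nu> s * \<theta>"
proof -
  have supp: "set_pmf \<nu> \<subseteq> MT_transient N" using assms(2) unfolding MT_QSD_def by blast
  have qsd: "\<And>t A. 0 \<le> t \<Longrightarrow> A \<subseteq> MT_transient N \<Longrightarrow> MT_cond N \<nu> t A = measure_pmf.prob \<nu> A"
    using assms(2) unfolding MT_QSD_def by blast
  have one: "measure_pmf.prob \<nu> (MT_transient N) = 1"
    using measure_measure_pmf_finite[OF transient_finite] sum_pmf_eq_1[OF transient_finite supp] by simp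
  have surv_ne: "MT_surv N \<nu> t \<noteq> 0" if "0 \<le> t" for t
  proof
    assume "MT_surv N \<nu> t = 0"
    hence "MT_cond N \<nu> t (MT_transient N) = 0" unfolding MT_cond_def by simp
    thus False using qsd[OF that order_refl] one by simp
  qed
  have eq: "MT_dist N \<nu> t s = pmf \<nu> s * MT_surv N \<nu> t" if "0 \<le> t" "s \<in> MT_transient N" for t s
  proof -
    have "MT_cond N \<nu> t {s} = pmf \<nu> s" using qsd[OF that(1), of "{s}"] that(2)
      by (simp add: measure_pmf_single)
    thus ?thesis unfolding MT_cond_def using surv_ne[OF that(1)] by (simp add: field_simps)
  qed
  define \<theta> where "\<theta> = (\<Sum>s'\<in>MT_transient N. \<Sum>w\<in>MT_space N. pmf \<nu> w * MT_gen N w s')"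
  have "(\<Sum>w\<in>MT_space N. pmf \<nu> w * MT_gen N w s) = pmf \<nu> s * \<theta>" if s: "s \<in> MT_transient N" for s
  proof (rule deriv_eq_right)
    have "((\<lambda>t. MT_dist N \<nu> t s) has_real_derivative
      (\<Sum>w\<in>MT_space N. MT_dist N \<nu> 0 w * MT_gen N w s)) (at 0)" by (rule dist_deriv)
    also have "(\<Sum>w\<in>MT_space N. MT_dist N \<nu> 0 w * MT_gen N w s) = (\<Sum>w\<in>MT_space N. pmf \<nu> w * MT_gen N w s)"
      by (intro sum.cong refl) (simp add: dist_zero)
    finally show "((\<lambda>t. MT_dist N \<nu> t s) has_real_derivative
      (\<Sum>w\<in>MT_space N. pmf \<nu> w * MT_gen N w s)) (at 0)" .
    have "((\<lambda>t. MT_surv N \<nu> t) has_real_derivative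
      (\<Sum>s'\<in>MT_transient N. \<Sum>w\<in>MT_space N. MT_dist N \<nu> 0 w * MT_gen N w s')) (at 0)"
      unfolding MT_surv_def[abs_def] by (intro DERIV_sum dist_deriv)
    also have "(\<Sum>s'\<in>MT_transient N. \<Sum>w\<in>MT_space N. MT_dist N \<nu> 0 w * MT_gen N w s') = \<theta>"
      unfolding \<theta>_def by (intro sum.cong refl) (simp add: dist_zero)
    finally show "((\<lambda>t. pmf \<nu> s * MT_surv N \<nu> t) has_real_derivative pmf \<nu> s * \<theta>) (at 0)"
      by (rule DERIV_cmult)
    show "\<And>t. 0 \<le> t \<Longrightarrow> MT_dist N \<nu> t s = pmf \<nu> s * MT_surv N \<nu> t" using eq s by blast
  qed
  thus ?thesis using that by blast
qed

lemma QSD_unique: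
  assumes N: "N \<ge> 1" and Q: "MT_QSD N \<nu>"
  shows "\<nu> = return_pmf (0,1)"
proof -
  define p where "p = pmf \<nu>"
  have supp: "set_pmf \<nu> \<subseteq> MT_transient N" using Q unfolding MT_QSD_def by blast
  obtain \<theta> where th: "\<And>s. s \<in> MT_transient N \<Longrightarrow>
      (\<Sum>w\<in>MT_space N. pmf \<nu> w * MT_gen N w s) = pmf \<nu> s * \<theta>"
    using QSD_eigen[OF N Q] by blast
  have EQ: "- (real N * real y) * p (x,y)
   + (if 2 \<le> y \<and> (x+1, y-1) \<in> MT_space N then real (x+1) * real (y-1) * p (x+1,y-1) else 0)
   + (if (x, y+1) \<in> MT_space N then real (y+1) * (real N - real x) * p (x,y+1) else 0) = p (x,y) * \<theta>"
    if "(x,y) \<in> MT_transient N" for x y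
    using th[OF that] inflow_sum[of x y N "pmf \<nu>"] that transient_sub[of N] unfolding p_def by auto
  have pnn: "0 \<le> p s" for s unfolding p_def by simp
  have pos_iff: "0 < p s \<longleftrightarrow> s \<in> set_pmf \<nu>" for s unfolding p_def using pmf_positive set_pmf_iff
    by (metis pmf_nonneg order_less_le)
  have c1: "0 < p (x-1,y+1)" if "(x,y) \<in> MT_transient N" "1 \<le> x" "0 < p (x,y)" for x y
  proof (rule ccontr)
    assume "\<not> 0 < p (x-1,y+1)"
    hence z: "p (x-1,y+1) = 0" using pnn by (simp add: order_less_le)
    have S': "(x-1,y+1) \<in> MT_transient N" using that(1,2) unfolding trans_iff by auto
    have sp: "2 \<le> y+1 \<and> (x-1+1, y+1-1) \<in> MT_space N" using that(1,2) transient_sub[of N] unfolding trans_iff space_iff by auto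
    have "real (x-1+1) * real (y+1-1) * p (x-1+1,y+1-1) > 0"
      using that unfolding trans_iff by (auto intro!: mult_pos_pos)
    moreover have "0 \<le> (if (x-1, y+1+1) \<in> MT_space N then real (y+1+1) * (real N - real (x-1)) * p (x-1,y+1+1) else 0)"
      using S' unfolding trans_iff by (auto intro!: mult_nonneg_nonneg pnn)
    ultimately show False using EQ[OF S'] sp z by auto
  qed
  have c2: "0 < p (x,y-1)" if "(x,y) \<in> MT_transient N" "2 \<le> y" "0 < p (x,y)" for x y
  proof (rule ccontr)
    assume "\<not> 0 < p (x,y-1)"
    hence z: "p (x,y-1) = 0" using pnn by (simp add: order_less_le)
    have S': "(x,y-1) \<in> MT_transient N" using that(1,2) unfolding trans_iff by auto
    have xN: "x < N" using that(1,2) unfolding trans_iff by auto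
    have sp: "(x, y-1+1) \<in> MT_space N" using that(1,2) transient_sub[of N] by auto
    have "real (y-1+1) * (real N - real x) * p (x,y-1+1) > 0"
      using that xN by auto
    moreover have "0 \<le> (if 2 \<le> y-1 \<and> (x+1, y-1-1) \<in> MT_space N then real (x+1) * real (y-1-1) * p (x+1,y-1-1) else 0)"
      by (auto intro!: mult_nonneg_nonneg pnn)
    ultimately show False using EQ[OF S'] sp z by auto
  qed
  have c3: "0 < p (0, x+y)" if "(x,y) \<in> MT_transient N" "0 < p (x,y)" for x y
    using that
  proof (induction x arbitrary: y)
    case 0 then show ?case by simp
  next
    case (Suc x)
    have "0 < p (x, y+1)" using c1[OF Suc.prems(1) _ Suc.prems(2)] by simp
    moreover have "(x, y+1) \<in> MT_transient N" using Suc.prems(1) unfolding trans_iff by auto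
    ultimately have "0 < p (0, x + (y+1))" using Suc.IH by blast
    thus ?case by simp
  qed
  have c4: "0 < p (0, 2) \<and> 0 < p (0,1)" if "(0,k) \<in> MT_transient N" "0 < p (0,k)" "2 \<le> k" for k
    using that
  proof (induction k)
    case 0 then show ?case by simp
  next
    case (Suc k)
    have pk: "0 < p (0, k)" using c2[OF Suc.prems(1) Suc.prems(3) Suc.prems(2)] by simp
    show ?case
    proof (cases "k = 1")
      case True
      then show ?thesis using Suc.prems pk by (simp add: numeral_2_eq_2)
    next
      case False
      hence "2 \<le> k" using Suc.prems(3) by simp
      moreover have "(0, k) \<in> MT_transient N" using Suc.prems(1,3) unfolding trans_iff by auto
      ultimately show ?thesis using Suc.IH pk by blast
    qed
  qed
  have fin: "finite (set_pmf \<nu>)" using supp transient_finite finite_subset by blast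
  define L where "L = (\<lambda>s::state. 2 * fst s + snd s)"
  have "Max (L ` set_pmf \<nu>) \<in> L ` set_pmf \<nu>" using fin set_pmf_not_empty by (intro Max_in) auto
  then obtain xs ys where smax: "(xs,ys) \<in> set_pmf \<nu>" "L (xs,ys) = Max (L ` set_pmf \<nu>)" by auto
  have Lmax: "L s \<le> L (xs,ys)" if "s \<in> set_pmf \<nu>" for s using smax(2) fin that by simp
  have Ss: "(xs,ys) \<in> MT_transient N" using smax supp by blast
  have ps: "0 < p (xs,ys)" using smax pos_iff by blast
  have z1: "p (xs+1, ys-1) = 0" if "2 \<le> ys"
  proof -
    have "(xs+1, ys-1) \<notin> set_pmf \<nu>" using Lmax[of "(xs+1,ys-1)"] that unfolding L_def by auto
    thus ?thesis using pos_iff pnn by (meson not_less order_antisym)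
  qed
  have z2: "p (xs, ys+1) = 0"
  proof -
    have "(xs, ys+1) \<notin> set_pmf \<nu>" using Lmax[of "(xs,ys+1)"] unfolding L_def by auto
    thus ?thesis using pos_iff pnn by (meson not_less order_antisym)
  qed
  have "- (real N * real ys) * p (xs,ys) = p (xs,ys) * \<theta>"
    using EQ[OF Ss] z1 z2 by (auto split: if_splits)
  hence "(\<theta> + real N * real ys) * p (xs,ys) = 0" by (simp add: algebra_simps)
  hence theta: "\<theta> = - (real N * real ys)" using ps by simp
  have S01: "(0,1) \<in> MT_transient N" using one_in_S[OF N] .
  have ys1: "1 \<le> ys" using Ss unfolding trans_iff by auto
  have p01: "0 < p (0,1)"
  proof (cases "xs + ys \<ge> 2")
    case True
    have "0 < p (0, xs+ys)" using c3[OF Ss ps] .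
    moreover have "(0, xs+ys) \<in> MT_transient N" using Ss unfolding trans_iff by auto
    ultimately show ?thesis using c4 True by blast
  next
    case False
    hence "(xs,ys) = (0,1)" using ys1 by auto
    thus ?thesis using ps by simp
  qed
  have sp02: "(0, 2) \<in> MT_space N" using N unfolding space_iff by auto
  have "- (real N * 1) * p (0,1) + real 2 * (real N - 0) * p (0,2) = p (0,1) * \<theta>"
    using EQ[OF S01] sp02 by (simp add: numeral_2_eq_2)
  hence key: "real N * (real ys - 1) * p (0,1) + 2 * real N * p (0,2) = 0"
    unfolding theta by (simp add: algebra_simps)
  have t1: "0 \<le> real N * (real ys - 1) * p (0,1)" using ys1 pnn by simp
  have t2: "0 \<le> 2 * real N * p (0,2)" using pnn by simp
  have "real N * p (0,2) = 0" using key t1 t2 by linarith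
  hence p02: "p (0,2) = 0" using N by simp
  have "set_pmf \<nu> \<subseteq> {(0,1)}"
  proof
    fix s assume s: "s \<in> set_pmf \<nu>"
    obtain x y where xy: "s = (x,y)" by (cases s)
    have Sx: "(x,y) \<in> MT_transient N" using s supp xy by blast
    have px: "0 < p (x,y)" using s xy pos_iff by blast
    have "\<not> 2 \<le> x + y"
    proof
      assume "2 \<le> x + y"
      moreover have "0 < p (0, x+y)" using c3[OF Sx px] .
      moreover have "(0, x+y) \<in> MT_transient N" using Sx unfolding trans_iff by auto
      ultimately have "0 < p (0,2)" using c4 by blast
      thus False using p02 by simp
    qed
    moreover have "1 \<le> y" using Sx unfolding trans_iff by auto
    ultimately show "s \<in> {(0,1)}" using xy by auto
  qed
  thus ?thesis by (simp add: set_pmf_subset_singleton)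
qed

definition bnd :: "nat \<Rightarrow> nat \<Rightarrow> nat \<Rightarrow> nat \<Rightarrow> real \<Rightarrow> real" where
  "bnd N a x y t = (if a < x then 0 else if x = a \<and> 2 \<le> y then exp (- (real N * t / 2))
     else if x = a then 1 else if y = 1 then (1+t)^(a-x) else (1+t)^(a-x-1))"

definition Bin :: "nat \<Rightarrow> nat \<Rightarrow> nat \<Rightarrow> real \<Rightarrow> real" where
  "Bin N a x t = (if a < x then 0 else if x = a then exp (- (real N * t / 2)) else (1+t)^(a-x-1))"

lemma bnd_nonneg: "0 \<le> t \<Longrightarrow> 0 \<le> bnd N a x y t"
  unfolding bnd_def by auto

lemma Bin_nonneg: "0 \<le> t \<Longrightarrow> 0 \<le> Bin N a x t"
  unfolding Bin_def by auto

lemma bnd_in: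
  assumes "0 \<le> t" "(x' = x+1 \<and> y' = y - 1 \<and> 2 \<le> y) \<or> (x' = x \<and> y' = y + 1)" "1 \<le> y"
  shows "bnd N a x' y' t \<le> Bin N a x t"
proof -
  have e1: "exp (- (real N * t / 2)) \<le> 1" using assms(1) by simp
  have p1: "1 \<le> (1+t)^k" for k using assms(1) by simp
  have pm: "(1+t)^k \<le> (1+t)^m" if "k \<le> m" for k m using assms(1) that by (intro power_increasing) auto
  show ?thesis
  proof (cases "a < x")
    case True then show ?thesis using assms(2) unfolding bnd_def Bin_def by auto
  next
    case False
    show ?thesis
    proof (cases "x = a")
      case True then show ?thesis using assms(2,3) unfolding bnd_def Bin_def by auto
    next
      case False
      hence xa: "x < a" using \<open>\<not> a < x\<close> by simp
      from assms(2) show ?thesis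
      proof
        assume h: "x' = x+1 \<and> y' = y - 1 \<and> 2 \<le> y"
        show ?thesis
        proof (cases "x + 1 = a")
          case True then show ?thesis using h e1 p1 xa unfolding bnd_def Bin_def by auto
        next
          case False
          hence "x + 1 < a" using xa by simp
          then show ?thesis using h pm[of "a - (x+1) - 1" "a - x - 1"] unfolding bnd_def Bin_def by auto
        qed
      next
        assume h: "x' = x \<and> y' = y + 1"
        then show ?thesis using xa assms(3) unfolding bnd_def Bin_def by auto
      qed
    qed
  qed
qed

lemma dpow: "((\<lambda>\<tau>::real. (1+\<tau>)^n) has_real_derivative real n * (1+\<tau>)^(n-1)) (at \<tau>)"
  using DERIV_pow[of n "1+\<tau>"] DERIV_chain2[OF DERIV_pow[of n] DERIV_add[OF DERIV_const[of 1] DERIV_ident]]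
  by simp

definition UB :: "nat \<Rightarrow> state pmf \<Rightarrow> nat \<Rightarrow> nat \<Rightarrow> nat \<Rightarrow> bool" where
  "UB N \<mu> a x y \<longleftrightarrow> (\<exists>C\<ge>0. \<forall>t\<ge>0. 0 \<le> hh N \<mu> (x,y) t \<and> hh N \<mu> (x,y) t \<le> C * bnd N a x y t)"

lemma upper:
  assumes N: "N \<ge> 1" and supp: "set_pmf \<mu> \<subseteq> MT_transient N" and amax: "\<And>s. s \<in> set_pmf \<mu> \<Longrightarrow> fst s \<le> a"
    and xyS: "(x,y) \<in> MT_transient N"
  shows "UB N \<mu> a x y"
proof (rule S_induct[where P = "UB N \<mu> a", OF _ xyS])
  fix x y assume xyS: "(x,y) \<in> MT_transient N"
    and IH: "\<And>x' y'. (x',y') \<in> MT_transient N \<Longrightarrow> 2*x+y < 2*x'+y' \<Longrightarrow> UB N \<mu> a x' y'"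
  have xysp: "(x,y) \<in> MT_space N" using xyS transient_sub by blast
  have xN: "x \<le> N" and y1: "1 \<le> y" using xyS unfolding trans_iff by auto
  define h where "h = hh N \<mu> (x,y)"
  define c where "c = real N * (real y - 1)"
  define i where "i = inw N \<mu> x y"
  have c0: "0 \<le> c" unfolding c_def using y1 by simp
  have dh: "(h has_real_derivative (- c * h \<tau> + i \<tau>)) (at \<tau>)" for \<tau>
    unfolding h_def c_def i_def by (rule h_deriv[OF xysp])
  define h0 where "h0 = pmf \<mu> (x,y)"
  have h0: "h 0 = h0" unfolding h_def h0_def by (rule hh_zero[OF xysp])
  have h0nn: "0 \<le> h0" unfolding h0_def by simp
  define T1 where "T1 = (\<lambda>t. if 2 \<le> y \<and> (x+1, y-1) \<in> MT_space N then real (x+1) * real (y-1) * hh N \<mu> (x+1,y-1) t else 0)"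
  define T2 where "T2 = (\<lambda>t. if (x, y+1) \<in> MT_space N then real (y+1) * (real N - real x) * hh N \<mu> (x,y+1) t else 0)"
  have iT: "i t = T1 t + T2 t" for t unfolding i_def inw_def T1_def T2_def by simp
  have B1: "\<exists>D\<ge>0. \<forall>t\<ge>0. 0 \<le> T1 t \<and> T1 t \<le> D * Bin N a x t"
  proof (cases "2 \<le> y \<and> (x+1, y-1) \<in> MT_space N")
    case True
    have S': "(x+1,y-1) \<in> MT_transient N" using True unfolding MT_transient_def MT_absorbing_def by auto
    have "UB N \<mu> a (x+1) (y-1)" by (rule IH[OF S']) (use True in auto)
    then obtain C where C: "C \<ge> 0" "\<And>t. t \<ge> 0 \<Longrightarrow> 0 \<le> hh N \<mu> (x+1,y-1) t \<and> hh N \<mu> (x+1,y-1) t \<le> C * bnd N a (x+1) (y-1) t"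
      unfolding UB_def by blast
    show ?thesis
    proof (intro exI[of _ "real (x+1) * real (y-1) * C"] conjI allI impI)
      fix t :: real assume t: "0 \<le> t"
      have b: "bnd N a (x+1) (y-1) t \<le> Bin N a x t" using bnd_in[OF t _ y1] True by auto
      show "0 \<le> T1 t" unfolding T1_def using C(2)[OF t] True by simp
      have "T1 t = real (x+1) * real (y-1) * hh N \<mu> (x+1,y-1) t" unfolding T1_def using True by simp
      also have "\<dots> \<le> real (x+1) * real (y-1) * (C * Bin N a x t)"
        using C(2)[OF t] mult_left_mono[OF b C(1)] by (intro mult_left_mono) auto
      finally show "T1 t \<le> real (x+1) * real (y-1) * C * Bin N a x t" by (simp add: mult_ac)
    qed (use C in auto)
  next
    case False
    then show ?thesis unfolding T1_def using Bin_nonneg by (intro exI[of _ 0]) auto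
  qed
  have B2: "\<exists>D\<ge>0. \<forall>t\<ge>0. 0 \<le> T2 t \<and> T2 t \<le> D * Bin N a x t"
  proof (cases "(x, y+1) \<in> MT_space N")
    case True
    have S': "(x,y+1) \<in> MT_transient N" using True unfolding MT_transient_def MT_absorbing_def by auto
    have "UB N \<mu> a x (y+1)" by (rule IH[OF S']) auto
    then obtain C where C: "C \<ge> 0" "\<And>t. t \<ge> 0 \<Longrightarrow> 0 \<le> hh N \<mu> (x,y+1) t \<and> hh N \<mu> (x,y+1) t \<le> C * bnd N a x (y+1) t"
      unfolding UB_def by blast
    have m: "0 \<le> real (y+1) * (real N - real x)" using xN by simp
    show ?thesis
    proof (intro exI[of _ "real (y+1) * (real N - real x) * C"] conjI allI impI)
      fix t :: real assume t: "0 \<le> t"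
      have b: "bnd N a x (y+1) t \<le> Bin N a x t" using bnd_in[OF t _ y1] by auto
      show "0 \<le> T2 t" unfolding T2_def using C(2)[OF t] True m by simp
      have "T2 t = real (y+1) * (real N - real x) * hh N \<mu> (x,y+1) t" unfolding T2_def using True by simp
      also have "\<dots> \<le> real (y+1) * (real N - real x) * (C * Bin N a x t)"
        using C(2)[OF t] mult_left_mono[OF b C(1)] m by (intro mult_left_mono) auto
      finally show "T2 t \<le> real (y+1) * (real N - real x) * C * Bin N a x t" by (simp add: mult_ac)
    qed (use C m in auto)
  next
    case False
    then show ?thesis unfolding T2_def using Bin_nonneg by (intro exI[of _ 0]) auto
  qed
  obtain D where D: "D \<ge> 0" "\<And>t. t \<ge> 0 \<Longrightarrow> 0 \<le> i t \<and> i t \<le> D * Bin N a x t"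
  proof -
    obtain D1 where D1: "D1 \<ge> 0" "\<forall>t\<ge>0. 0 \<le> T1 t \<and> T1 t \<le> D1 * Bin N a x t" using B1 by blast
    obtain D2 where D2: "D2 \<ge> 0" "\<forall>t\<ge>0. 0 \<le> T2 t \<and> T2 t \<le> D2 * Bin N a x t" using B2 by blast
    show ?thesis
    proof (rule that[of "D1 + D2"])
      show "0 \<le> D1 + D2" using D1(1) D2(1) by simp
      fix t :: real assume t: "0 \<le> t"
      have a1: "0 \<le> T1 t" "T1 t \<le> D1 * Bin N a x t" using D1(2) t by auto
      have a2: "0 \<le> T2 t" "T2 t \<le> D2 * Bin N a x t" using D2(2) t by auto
      show "0 \<le> i t \<and> i t \<le> (D1 + D2) * Bin N a x t"
        unfolding iT distrib_right using a1 a2 by linarith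
    qed
  qed
  have nn: "0 \<le> h t" if "0 \<le> t" for t
  proof (rule cmp[where f = "\<lambda>_. 0" and f' = "\<lambda>_. 0" and g = h and g' = "\<lambda>\<tau>. - c * h \<tau> + i \<tau>" and c = c and T = 0])
    show "0 \<le> t" by fact
    show "((\<lambda>_. 0) has_real_derivative 0) (at \<tau>)" for \<tau> by simp
    show "(h has_real_derivative - c * h \<tau> + i \<tau>) (at \<tau>)" for \<tau> by (rule dh)
    show "0 + c * 0 \<le> - c * h \<tau> + i \<tau> + c * h \<tau>" if "0 \<le> \<tau>" for \<tau> using D(2)[OF that] by simp
    show "0 \<le> h 0" using h0 h0nn by simp
  qed
  have Npos: "0 < real N" using N by simp
  have ub: "\<exists>C\<ge>0. \<forall>t\<ge>0. h t \<le> C * bnd N a x y t"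
  proof (cases "a < x")
    case True
    have "h0 = 0" unfolding h0_def using amax[of "(x,y)"] True by (auto simp: set_pmf_eq)
    have "h t \<le> 0" if "0 \<le> t" for t
    proof (rule cmp[where f = h and g = "\<lambda>_. 0" and g' = "\<lambda>_. 0" and f' = "\<lambda>\<tau>. - c * h \<tau> + i \<tau>" and c = c and T = 0])
      show "0 \<le> t" by fact
      show "((\<lambda>_. 0) has_real_derivative 0) (at \<tau>)" for \<tau> by simp
      show "(h has_real_derivative - c * h \<tau> + i \<tau>) (at \<tau>)" for \<tau> by (rule dh)
      show "- c * h \<tau> + i \<tau> + c * h \<tau> \<le> 0 + c * 0" if "0 \<le> \<tau>" for \<tau>
        using D(2)[OF that] True by (simp add: Bin_def)
      show "h 0 \<le> 0" using h0 \<open>h0 = 0\<close> by simp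
    qed
    thus ?thesis unfolding bnd_def using True by auto
  next
    case False
    show ?thesis
    proof (cases "x = a")
      case xa: True
      show ?thesis
      proof (cases "2 \<le> y")
        case True
        define C where "C = h0 + 2 * D / real N"
        have C0: "0 \<le> C" unfolding C_def using h0nn D(1) Npos by simp
        have cN: "real N \<le> c"
        proof -
          have "1 \<le> real y - 1" using True by simp
          thus ?thesis unfolding c_def using mult_left_mono[of 1 "real y - 1" "real N"] by simp
        qed
        have "h t \<le> C * exp (- (real N * t / 2))" if "0 \<le> t" for t
        proof (rule cmp[where f = h and g = "\<lambda>\<tau>. C * exp (- (real N * \<tau> / 2))"
              and g' = "\<lambda>\<tau>. C * (exp (- (real N * \<tau> / 2)) * (- (real N / 2)))"
              and f' = "\<lambda>\<tau>. - c * h \<tau> + i \<tau>" and c = c and T = 0])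
          show "0 \<le> t" by fact
          show "(h has_real_derivative - c * h \<tau> + i \<tau>) (at \<tau>)" for \<tau> by (rule dh)
          show "((\<lambda>\<tau>. C * exp (- (real N * \<tau> / 2))) has_real_derivative C * (exp (- (real N * \<tau> / 2)) * (- (real N / 2)))) (at \<tau>)" for \<tau>
            by (auto intro!: derivative_eq_intros)
          show "h 0 \<le> C * exp (- (real N * 0 / 2))" using h0 unfolding C_def using D(1) Npos by simp
          fix \<tau> :: real assume \<tau>: "0 \<le> \<tau>"
          have "i \<tau> \<le> D * exp (- (real N * \<tau> / 2))" using D(2)[OF \<tau>] xa unfolding Bin_def by simp
          also have "\<dots> \<le> C * (real N / 2) * exp (- (real N * \<tau> / 2))"
            unfolding C_def using Npos h0nn by (intro mult_right_mono) (auto simp: field_simps)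
          also have "\<dots> \<le> C * (c - real N / 2) * exp (- (real N * \<tau> / 2))"
            using cN C0 by (intro mult_right_mono mult_left_mono) auto
          finally show "- c * h \<tau> + i \<tau> + c * h \<tau> \<le> C * (exp (- (real N * \<tau> / 2)) * (- (real N / 2))) + c * (C * exp (- (real N * \<tau> / 2)))"
            by (simp add: algebra_simps)
        qed
        thus ?thesis using C0 xa True unfolding bnd_def by auto
      next
        case False
        hence y1': "y = 1" using y1 by simp
        have c00: "c = 0" unfolding c_def y1' by simp
        define C where "C = h0 + 2 * D / real N"
        have C0: "0 \<le> C" unfolding C_def using h0nn D(1) Npos by simp
        have "h t \<le> C - 2 * D / real N * exp (- (real N * t / 2))" if "0 \<le> t" for t
        proof (rule cmp[where f = h and g = "\<lambda>\<tau>. C - 2 * D / real N * exp (- (real N * \<tau> / 2))"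
              and g' = "\<lambda>\<tau>. - (2 * D / real N * (exp (- (real N * \<tau> / 2)) * (- (real N / 2))))"
              and f' = "\<lambda>\<tau>. - c * h \<tau> + i \<tau>" and c = c and T = 0])
          show "0 \<le> t" by fact
          show "(h has_real_derivative - c * h \<tau> + i \<tau>) (at \<tau>)" for \<tau> by (rule dh)
          show "((\<lambda>\<tau>. C - 2 * D / real N * exp (- (real N * \<tau> / 2))) has_real_derivative - (2 * D / real N * (exp (- (real N * \<tau> / 2)) * (- (real N / 2))))) (at \<tau>)" for \<tau>
            by (auto intro!: derivative_eq_intros)
          show "h 0 \<le> C - 2 * D / real N * exp (- (real N * 0 / 2))" using h0 unfolding C_def by simp
          fix \<tau> :: real assume \<tau>: "0 \<le> \<tau>"
          have "i \<tau> \<le> D * exp (- (real N * \<tau> / 2))" using D(2)[OF \<tau>] xa unfolding Bin_def by simp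
          thus "- c * h \<tau> + i \<tau> + c * h \<tau> \<le> - (2 * D / real N * (exp (- (real N * \<tau> / 2)) * (- (real N / 2)))) + c * (C - 2 * D / real N * exp (- (real N * \<tau> / 2)))"
            unfolding c00 using Npos by (simp add: field_simps)
        qed
        moreover have "C - 2 * D / real N * exp (- (real N * t / 2)) \<le> C" for t
          using D(1) Npos by simp
        ultimately have "h t \<le> C" if "0 \<le> t" for t using that by (meson order_trans)
        thus ?thesis using C0 xa False unfolding bnd_def by auto
      qed
    next
      case xna: False
      hence xa: "x < a" using \<open>\<not> a < x\<close> by simp
      define k where "k = a - x - 1"
      have Bk: "Bin N a x t = (1+t)^k" for t unfolding Bin_def k_def using xa by simp
      show ?thesis
      proof (cases "y = 1")
        case True
        have c00: "c = 0" unfolding c_def True by simp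
        define C where "C = h0 + D"
        have C0: "0 \<le> C" unfolding C_def using h0nn D(1) by simp
        have "h t \<le> C * (1+t)^(Suc k)" if "0 \<le> t" for t
        proof (rule cmp[where f = h and g = "\<lambda>\<tau>. C * (1+\<tau>)^(Suc k)"
              and g' = "\<lambda>\<tau>. C * (real (Suc k) * (1+\<tau>)^k)"
              and f' = "\<lambda>\<tau>. - c * h \<tau> + i \<tau>" and c = c and T = 0])
          show "0 \<le> t" by fact
          show "(h has_real_derivative - c * h \<tau> + i \<tau>) (at \<tau>)" for \<tau> by (rule dh)
          show "((\<lambda>\<tau>. C * (1+\<tau>)^(Suc k)) has_real_derivative C * (real (Suc k) * (1+\<tau>)^k)) (at \<tau>)" for \<tau>
            using DERIV_cmult[OF dpow[of "Suc k"], of C] by simp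
          show "h 0 \<le> C * (1+0)^(Suc k)" using h0 D(1) unfolding C_def by simp
          fix \<tau> :: real assume \<tau>: "0 \<le> \<tau>"
          have "i \<tau> \<le> D * (1+\<tau>)^k" using D(2)[OF \<tau>] Bk by simp
          also have "\<dots> \<le> C * (real (Suc k) * (1+\<tau>)^k)"
          proof -
            have "0 \<le> C * real k" using C0 by simp
            hence "D \<le> C * real (Suc k)" unfolding C_def using h0nn D(1)
              by (simp add: algebra_simps)
            thus ?thesis using \<tau> by (simp add: mult.assoc[symmetric] mult_right_mono)
          qed
          finally show "- c * h \<tau> + i \<tau> + c * h \<tau> \<le> C * (real (Suc k) * (1+\<tau>)^k) + c * (C * (1+\<tau>)^(Suc k))"
            unfolding c00 by simp
        qed
        moreover have "Suc k = a - x" unfolding k_def using xa by simp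
        ultimately show ?thesis using C0 xa True unfolding bnd_def by auto
      next
        case False
        hence y2: "2 \<le> y" using y1 by simp
        have c1: "1 \<le> c"
        proof -
          have "1 \<le> real y - 1" using y2 by simp
          moreover have "1 \<le> real N" using N by simp
          ultimately show ?thesis unfolding c_def using mult_mono[of 1 "real N" 1 "real y - 1"] by simp
        qed
        define C where "C = h0 + D"
        have C0: "0 \<le> C" unfolding C_def using h0nn D(1) by simp
        have "h t \<le> C * (1+t)^k" if "0 \<le> t" for t
        proof (rule cmp[where f = h and g = "\<lambda>\<tau>. C * (1+\<tau>)^k"
              and g' = "\<lambda>\<tau>. C * (real k * (1+\<tau>)^(k-1))"
              and f' = "\<lambda>\<tau>. - c * h \<tau> + i \<tau>" and c = c and T = 0])
          show "0 \<le> t" by fact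
          show "(h has_real_derivative - c * h \<tau> + i \<tau>) (at \<tau>)" for \<tau> by (rule dh)
          show "((\<lambda>\<tau>. C * (1+\<tau>)^k) has_real_derivative C * (real k * (1+\<tau>)^(k-1))) (at \<tau>)" for \<tau>
            using DERIV_cmult[OF dpow[of k], of C] by simp
          show "h 0 \<le> C * (1+0)^k" using h0 D(1) unfolding C_def by simp
          fix \<tau> :: real assume \<tau>: "0 \<le> \<tau>"
          have "i \<tau> \<le> D * (1+\<tau>)^k" using D(2)[OF \<tau>] Bk by simp
          also have "\<dots> \<le> C * (1+\<tau>)^k" unfolding C_def using h0nn \<tau> by (intro mult_right_mono) auto
          also have "\<dots> \<le> c * (C * (1+\<tau>)^k)" using mult_right_mono[OF c1, of "C * (1+\<tau>)^k"] C0 \<tau> by simp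
          also have "\<dots> \<le> C * (real k * (1+\<tau>)^(k-1)) + c * (C * (1+\<tau>)^k)"
            using C0 \<tau> by simp
          finally show "- c * h \<tau> + i \<tau> + c * h \<tau> \<le> C * (real k * (1+\<tau>)^(k-1)) + c * (C * (1+\<tau>)^k)"
            by simp
        qed
        thus ?thesis using C0 xa False unfolding bnd_def k_def by auto
      qed
    qed
  qed
  show "UB N \<mu> a x y" unfolding UB_def using ub nn unfolding h_def by blast
qed

lemma hnn:
  assumes N: "N \<ge> 1" and supp: "set_pmf \<mu> \<subseteq> MT_transient N" and s: "s \<in> MT_transient N" and t: "0 \<le> t"
  shows "0 \<le> hh N \<mu> s t"
proof -
  obtain x y where xy: "s = (x,y)" by (cases s)
  have "UB N \<mu> N x y"
    by (rule upper[OF N supp]) (use supp s xy in \<open>auto simp: trans_iff\<close>)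
  thus ?thesis unfolding UB_def xy using t by blast
qed

lemma inw_nn:
  assumes N: "N \<ge> 1" and supp: "set_pmf \<mu> \<subseteq> MT_transient N" and s: "(x,y) \<in> MT_transient N" and t: "0 \<le> t"
  shows "0 \<le> inw N \<mu> x y t"
proof -
  have xN: "x \<le> N" using s unfolding trans_iff by auto
  have a: "0 \<le> hh N \<mu> (x+1,y-1) t" if "2 \<le> y" "(x+1, y-1) \<in> MT_space N"
  proof -
    have "(x+1,y-1) \<in> MT_transient N" using that unfolding trans_iff space_iff by auto
    thus ?thesis using hnn[OF N supp _ t] by blast
  qed
  have b: "0 \<le> hh N \<mu> (x,y+1) t" if "(x, y+1) \<in> MT_space N"
  proof -
    have "(x,y+1) \<in> MT_transient N" using that unfolding trans_iff space_iff by auto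
    thus ?thesis using hnn[OF N supp _ t] by blast
  qed
  show ?thesis unfolding inw_def using a b xN by (auto intro!: add_nonneg_nonneg mult_nonneg_nonneg)
qed

lemma h_deriv1:
  assumes "(x,1) \<in> MT_space N" "(x,2) \<in> MT_space N"
  shows "(hh N \<mu> (x,1) has_real_derivative (2 * (real N - real x) * hh N \<mu> (x,2) t)) (at t)"
  using h_deriv[OF assms(1), of \<mu> t] assms(2) unfolding inw_def by (simp add: numeral_2_eq_2)

lemma h_deriv2:
  assumes "(x,2) \<in> MT_space N"
  shows "(hh N \<mu> (x,2) has_real_derivative (- real N * hh N \<mu> (x,2) t + inw N \<mu> x 2 t)) (at t)"
  using h_deriv[OF assms(1), of \<mu> t] by simp

lemma inw2_ge:
  assumes N: "N \<ge> 1" and supp: "set_pmf \<mu> \<subseteq> MT_transient N" and s: "(x+1,1) \<in> MT_transient N" and t: "0 \<le> t"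
  shows "real (x+1) * hh N \<mu> (x+1,1) t \<le> inw N \<mu> x 2 t"
proof -
  have xN: "x + 1 \<le> N" using s unfolding trans_iff by auto
  have b: "0 \<le> hh N \<mu> (x,3) t" if "(x, 3) \<in> MT_space N"
  proof -
    have "(x,3) \<in> MT_transient N" using that unfolding trans_iff space_iff by auto
    thus ?thesis using hnn[OF N supp _ t] by blast
  qed
  have sp: "(x+1, 1) \<in> MT_space N" using s transient_sub by blast
  have "inw N \<mu> x 2 t = real (x+1) * hh N \<mu> (x+1,1) t
     + (if (x, 3) \<in> MT_space N then 3 * (real N - real x) * hh N \<mu> (x,3) t else 0)"
    unfolding inw_def using sp by (simp add: numeral_3_eq_3 numeral_2_eq_2)
  moreover have "0 \<le> (if (x, 3) \<in> MT_space N then 3 * (real N - real x) * hh N \<mu> (x,3) t else 0)"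
    using b xN by auto
  ultimately show ?thesis by linarith
qed

lemma lower_a:
  assumes N: "N \<ge> 1" and supp: "set_pmf \<mu> \<subseteq> MT_transient N" and u0: "(a,y0) \<in> set_pmf \<mu>"
  shows "\<exists>T \<beta>. 0 \<le> T \<and> 0 < \<beta> \<and> (\<forall>t\<ge>T. \<beta> \<le> hh N \<mu> (a,1) t)"
proof -
  have S0: "(a,y0) \<in> MT_transient N" using u0 supp by blast
  have aN: "a \<le> N" and y01: "1 \<le> y0" and y0N: "y0 \<le> N + 1 - a" using S0 unfolding trans_iff by auto
  have Sa1: "(a,1) \<in> MT_transient N" using aN unfolding trans_iff by auto
  have spa1: "(a,1) \<in> MT_space N" using Sa1 transient_sub by blast
  define h where "h = hh N \<mu> (a,1)"
  have dh: "(h has_real_derivative inw N \<mu> a 1 t) (at t)" for t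
    using h_deriv[OF spa1, of \<mu> t] unfolding h_def by simp
  have mono: "h s \<le> h t" if "0 \<le> s" "s \<le> t" for s t
    by (rule DERIV_nonneg_imp_nondecreasing[OF that(2)])
       (use dh inw_nn[OF N supp Sa1] that in \<open>auto intro!: exI\<close>)
  have "\<exists>T>0. 0 < h T"
  proof (rule ccontr)
    assume "\<not> (\<exists>T>0. 0 < h T)"
    hence z1: "\<forall>t>0. hh N \<mu> (a,1) t = 0" using hnn[OF N supp Sa1] unfolding h_def
      by (metis less_eq_real_def not_le)
    have zprop: "\<forall>t>0. hh N \<mu> (a, Suc j) t = 0" if "Suc j \<le> y0" for j
      using that
    proof (induction j)
      case 0 then show ?case using z1 by simp
    next
      case (Suc j)
      have IH: "\<forall>t>0. hh N \<mu> (a, Suc j) t = 0" using Suc by simp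
      have Sj: "(a, Suc j) \<in> MT_transient N" using Suc.prems y0N aN unfolding trans_iff by auto
      have spj: "(a, Suc j) \<in> MT_space N" using Sj transient_sub by blast
      have spj1: "(a, Suc j + 1) \<in> MT_space N" using Suc.prems y0N aN unfolding space_iff by auto
      have Sj1: "(a, Suc j + 1) \<in> MT_transient N" using Suc.prems y0N aN unfolding trans_iff by auto
      have aN': "a < N" using Suc.prems y0N by auto
      show ?case
      proof (intro allI impI)
        fix t :: real assume t: "0 < t"
        have d: "(hh N \<mu> (a, Suc j) has_real_derivative (- (real N * (real (Suc j) - 1)) * hh N \<mu> (a, Suc j) t + inw N \<mu> a (Suc j) t)) (at t)"
          by (rule h_deriv[OF spj])
        have "- (real N * (real (Suc j) - 1)) * hh N \<mu> (a, Suc j) t + inw N \<mu> a (Suc j) t = 0"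
          by (rule DERIV_local_const[OF d t]) (use IH t in \<open>auto simp: abs_if split: if_splits\<close>)
        hence iz: "inw N \<mu> a (Suc j) t = 0" using IH t by simp
        have m1: "0 \<le> (if 2 \<le> Suc j \<and> (a+1, Suc j-1) \<in> MT_space N then real (a+1) * real (Suc j-1) * hh N \<mu> (a+1,Suc j-1) t else 0)"
          using hnn[OF N supp _ less_imp_le[OF t], of "(a+1, Suc j - 1)"] unfolding trans_iff space_iff by auto
        have m2: "0 \<le> hh N \<mu> (a, Suc j + 1) t" using hnn[OF N supp Sj1] t by simp
        have "real (Suc j + 1) * (real N - real a) * hh N \<mu> (a, Suc j + 1) t = 0"
          using iz m1 m2 spj1 aN' unfolding inw_def by (simp add: add_nonneg_eq_0_iff)
        thus "hh N \<mu> (a, Suc (Suc j)) t = 0" using aN' by simp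
      qed
    qed
    obtain j where j: "y0 = Suc j" using y01 by (cases y0) auto
    have z0: "hh N \<mu> (a,y0) 1 = 0" using zprop[of j] j by simp
    \<comment> \<open>but h(a,y0) is bounded below by a positive exponential\<close>
    define p0 where "p0 = pmf \<mu> (a,y0)"
    have p0: "0 < p0" unfolding p0_def using u0 by (simp add: pmf_positive)
    define c where "c = real N * (real y0 - 1)"
    have spy0: "(a,y0) \<in> MT_space N" using S0 transient_sub by blast
    have "p0 * exp (- c * 1) \<le> hh N \<mu> (a,y0) 1"
    proof (rule cmp[where f = "\<lambda>\<tau>. p0 * exp (- c * \<tau>)" and f' = "\<lambda>\<tau>. p0 * (exp (- c * \<tau>) * (- c))"
          and g = "hh N \<mu> (a,y0)" and g' = "\<lambda>\<tau>. - c * hh N \<mu> (a,y0) \<tau> + inw N \<mu> a y0 \<tau>" and c = c and T = 0])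
      show "(0::real) \<le> 1" by simp
      show "((\<lambda>\<tau>. p0 * exp (- c * \<tau>)) has_real_derivative p0 * (exp (- c * \<tau>) * (- c))) (at \<tau>)" for \<tau>
        by (auto intro!: derivative_eq_intros)
      show "(hh N \<mu> (a,y0) has_real_derivative - c * hh N \<mu> (a,y0) \<tau> + inw N \<mu> a y0 \<tau>) (at \<tau>)" for \<tau>
        unfolding c_def by (rule h_deriv[OF spy0])
      show "p0 * (exp (- c * \<tau>) * (- c)) + c * (p0 * exp (- c * \<tau>)) \<le> - c * hh N \<mu> (a,y0) \<tau> + inw N \<mu> a y0 \<tau> + c * hh N \<mu> (a,y0) \<tau>"
        if "0 \<le> \<tau>" for \<tau> using inw_nn[OF N supp S0 that] by (simp add: algebra_simps)
      show "p0 * exp (- c * 0) \<le> hh N \<mu> (a,y0) 0" using hh_zero[OF spy0] unfolding p0_def by simp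
    qed
    moreover have "0 < p0 * exp (- c * 1)" using p0 by simp
    ultimately show False using z0 by simp
  qed
  then obtain T where T: "0 < T" "0 < h T" by blast
  show ?thesis
    by (rule exI[of _ T], rule exI[of _ "h T"]) (use T mono in \<open>auto simp: h_def\<close>)
qed

lemma dpowT: "((\<lambda>\<tau>::real. (\<tau> - T)^n) has_real_derivative real n * (\<tau> - T)^(n-1)) (at \<tau>)"
  using DERIV_chain2[OF DERIV_pow[of n] DERIV_diff[OF DERIV_ident DERIV_const[of T]]] by simp

lemma pow_pred_le: "0 \<le> (s::real) \<Longrightarrow> s^(j-1) \<le> s^j + 1"
proof (cases "s \<le> 1")
  case True
  assume "0 \<le> s" thus ?thesis using True power_le_one[of s "j-1"] zero_le_power[of s j] by linarith
next
  case False
  hence "s^(j-1) \<le> s^j" by (intro power_increasing) auto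
  thus ?thesis by simp
qed

lemma lower_step:
  assumes N: "N \<ge> 1" and supp: "set_pmf \<mu> \<subseteq> MT_transient N" and xa: "x < a" and aN: "a \<le> N"
    and T: "0 \<le> T" and \<beta>: "0 < \<beta>" and lb: "\<And>t. t \<ge> T \<Longrightarrow> \<beta> * (t-T)^j \<le> hh N \<mu> (x+1,1) t"
  shows "\<exists>T' \<beta>'. 0 \<le> T' \<and> 0 < \<beta>' \<and> (\<forall>t\<ge>T'. \<beta>' * (t-T')^(Suc j) \<le> hh N \<mu> (x,1) t)"
proof -
  have S1: "(x+1,1) \<in> MT_transient N" using xa aN unfolding trans_iff by auto
  have S2: "(x,2) \<in> MT_transient N" using xa aN unfolding trans_iff by auto
  have sp2: "(x,2) \<in> MT_space N" using S2 transient_sub by blast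
  have S11: "(x,1) \<in> MT_transient N" using xa aN unfolding trans_iff by auto
  have sp1: "(x,1) \<in> MT_space N" using S11 transient_sub by blast
  define h1 where "h1 = hh N \<mu> (x,1)"
  define h2 where "h2 = hh N \<mu> (x,2)"
  define r where "r = 2 * (real N - real x)"
  have r: "0 < r" unfolding r_def using xa aN by simp
  have Npos: "0 < real N" using N by simp
  have dh1: "(h1 has_real_derivative r * h2 \<tau>) (at \<tau>)" for \<tau>
    unfolding h1_def h2_def r_def by (rule h_deriv1[OF sp1 sp2])
  have dh2: "(h2 has_real_derivative - real N * h2 \<tau> + inw N \<mu> x 2 \<tau>) (at \<tau>)" for \<tau>
    unfolding h2_def by (rule h_deriv2[OF sp2])
  have inlb: "real (x+1) * \<beta> * (\<tau>-T)^j \<le> inw N \<mu> x 2 \<tau>" if "T \<le> \<tau>" for \<tau>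
  proof -
    have "real (x+1) * \<beta> * (\<tau>-T)^j \<le> real (x+1) * hh N \<mu> (x+1,1) \<tau>"
      using lb[OF that] by (simp add: mult.assoc mult_left_mono)
    also have "\<dots> \<le> inw N \<mu> x 2 \<tau>" using inw2_ge[OF N supp S1] that T by simp
    finally show ?thesis .
  qed
  have h1nn: "0 \<le> h1 \<tau>" "0 \<le> h2 \<tau>" if "0 \<le> \<tau>" for \<tau>
    unfolding h1_def h2_def using hnn[OF N supp S11 that] hnn[OF N supp S2 that] by auto
  show ?thesis
  proof (cases j)
    case 0
    define \<gamma> where "\<gamma> = real (x+1) * \<beta> / real N"
    have \<gamma>: "0 < \<gamma>" unfolding \<gamma>_def using \<beta> Npos by simp
    have l2: "\<gamma> * (1 - exp (- (real N * (t - T)))) \<le> h2 t" if "T \<le> t" for t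
    proof (rule cmp[where f = "\<lambda>\<tau>. \<gamma> * (1 - exp (- (real N * (\<tau> - T))))"
          and f' = "\<lambda>\<tau>. \<gamma> * (exp (- (real N * (\<tau> - T))) * real N)"
          and g = h2 and g' = "\<lambda>\<tau>. - real N * h2 \<tau> + inw N \<mu> x 2 \<tau>" and c = "real N" and T = T])
      show "T \<le> t" by fact
      show "((\<lambda>\<tau>. \<gamma> * (1 - exp (- (real N * (\<tau> - T))))) has_real_derivative \<gamma> * (exp (- (real N * (\<tau> - T))) * real N)) (at \<tau>)" for \<tau>
        by (auto intro!: derivative_eq_intros)
      show "(h2 has_real_derivative - real N * h2 \<tau> + inw N \<mu> x 2 \<tau>) (at \<tau>)" for \<tau> by (rule dh2)
      show "\<gamma> * (exp (- (real N * (\<tau> - T))) * real N) + real N * (\<gamma> * (1 - exp (- (real N * (\<tau> - T)))))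
          \<le> - real N * h2 \<tau> + inw N \<mu> x 2 \<tau> + real N * h2 \<tau>" if "T \<le> \<tau>" for \<tau>
      proof -
        have "\<gamma> * (exp (- (real N * (\<tau> - T))) * real N) + real N * (\<gamma> * (1 - exp (- (real N * (\<tau> - T)))))
            = real (x+1) * \<beta>" unfolding \<gamma>_def using Npos by (simp add: field_simps)
        thus ?thesis using inlb[OF that] 0 by simp
      qed
      show "\<gamma> * (1 - exp (- (real N * (T - T)))) \<le> h2 T" using h1nn T by simp
    qed
    have e1: "exp (- 1::real) \<le> 1/2"
    proof -
      have "2 \<le> exp (1::real)" using exp_ge_add_one_self[of 1] by simp
      thus ?thesis by (simp add: exp_minus field_simps)
    qed
    have l2': "\<gamma> / 2 \<le> h2 t" if "T + 1 \<le> t" for t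
    proof -
      have "1 \<le> real N * (t - T)" using that N mult_mono[of 1 "real N" 1 "t - T"] by simp
      hence "exp (- (real N * (t - T))) \<le> exp (-1)" by simp
      hence "exp (- (real N * (t - T))) \<le> 1/2" using e1 by linarith
      hence "\<gamma> / 2 \<le> \<gamma> * (1 - exp (- (real N * (t - T))))" using \<gamma> by (simp add: field_simps)
      thus ?thesis using l2[of t] that by simp
    qed
    define \<beta>' where "\<beta>' = r * \<gamma> / 2"
    have "\<beta>' * (t - (T+1)) \<le> h1 t" if "T + 1 \<le> t" for t
    proof (rule cmp[where f = "\<lambda>\<tau>. \<beta>' * (\<tau> - (T+1))" and f' = "\<lambda>\<tau>. \<beta>'"
          and g = h1 and g' = "\<lambda>\<tau>. r * h2 \<tau>" and c = 0 and T = "T+1"])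
      show "T + 1 \<le> t" by fact
      show "((\<lambda>\<tau>. \<beta>' * (\<tau> - (T+1))) has_real_derivative \<beta>') (at \<tau>)" for \<tau>
        by (auto intro!: derivative_eq_intros)
      show "(h1 has_real_derivative r * h2 \<tau>) (at \<tau>)" for \<tau> by (rule dh1)
      show "\<beta>' + 0 * (\<beta>' * (\<tau> - (T+1))) \<le> r * h2 \<tau> + 0 * h1 \<tau>" if "T + 1 \<le> \<tau>" for \<tau>
        using l2'[OF that] r unfolding \<beta>'_def by (simp add: mult_left_mono)
      show "\<beta>' * (T + 1 - (T+1)) \<le> h1 (T+1)" using h1nn T by simp
    qed
    moreover have "0 < \<beta>'" unfolding \<beta>'_def using r \<gamma> by simp
    ultimately show ?thesis using T 0 unfolding h1_def
      by (intro exI[of _ "T+1"] exI[of _ \<beta>']) auto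
  next
    case (Suc j')
    define \<gamma> where "\<gamma> = real (x+1) * \<beta> / (real j + real N)"
    have \<gamma>: "0 < \<gamma>" unfolding \<gamma>_def using \<beta> Npos by simp
    define q where "q = real j / real N"
    have q: "0 \<le> q" unfolding q_def by simp
    have l2: "\<gamma> * ((t - T)^j - q) \<le> h2 t" if "T \<le> t" for t
    proof (rule cmp[where f = "\<lambda>\<tau>. \<gamma> * ((\<tau> - T)^j - q)"
          and f' = "\<lambda>\<tau>. \<gamma> * (real j * (\<tau> - T)^(j-1))"
          and g = h2 and g' = "\<lambda>\<tau>. - real N * h2 \<tau> + inw N \<mu> x 2 \<tau>" and c = "real N" and T = T])
      show "T \<le> t" by fact
      show "((\<lambda>\<tau>. \<gamma> * ((\<tau> - T)^j - q)) has_real_derivative \<gamma> * (real j * (\<tau> - T)^(j-1))) (at \<tau>)" for \<tau>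
        using DERIV_cmult[OF DERIV_diff[OF dpowT[of T j \<tau>] DERIV_const[of q]], of \<gamma>] by simp
      show "(h2 has_real_derivative - real N * h2 \<tau> + inw N \<mu> x 2 \<tau>) (at \<tau>)" for \<tau> by (rule dh2)
      show "\<gamma> * (real j * (\<tau> - T)^(j-1)) + real N * (\<gamma> * ((\<tau> - T)^j - q))
          \<le> - real N * h2 \<tau> + inw N \<mu> x 2 \<tau> + real N * h2 \<tau>" if "T \<le> \<tau>" for \<tau>
      proof -
        have s0: "0 \<le> \<tau> - T" using that by simp
        have "\<gamma> * (real j * (\<tau> - T)^(j-1)) \<le> \<gamma> * (real j * ((\<tau> - T)^j + 1))"
          using pow_pred_le[OF s0, of j] \<gamma> by (intro mult_left_mono) auto
        also have "\<gamma> * (real j * ((\<tau> - T)^j + 1)) + real N * (\<gamma> * ((\<tau> - T)^j - q))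
            = real (x+1) * \<beta> * (\<tau>-T)^j"
        proof -
          have nq: "real N * q = real j" unfolding q_def using Npos by simp
          have gj: "\<gamma> * (real j + real N) = real (x+1) * \<beta>" unfolding \<gamma>_def using Npos
            by (simp add: field_simps add_pos_nonneg)
          have "\<gamma> * (real j * ((\<tau> - T)^j + 1)) + real N * (\<gamma> * ((\<tau> - T)^j - q))
              = \<gamma> * (real j + real N) * (\<tau> - T)^j + \<gamma> * (real j - real N * q)"
            by (simp add: algebra_simps)
          thus ?thesis unfolding nq gj by simp
        qed
        finally have "\<gamma> * (real j * (\<tau> - T)^(j-1)) + real N * (\<gamma> * ((\<tau> - T)^j - q)) \<le> real (x+1) * \<beta> * (\<tau>-T)^j"
          by linarith
        thus ?thesis using inlb[OF that] by simp
      qed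
      show "\<gamma> * ((T - T)^j - q) \<le> h2 T" proof -
        have "0 \<le> \<gamma> * q" using q \<gamma> by simp
        thus ?thesis using h1nn[OF T] Suc by simp
      qed
    qed
    define g1 where "g1 = (\<lambda>\<tau>. r * \<gamma> * ((\<tau> - T)^(Suc j) / real (Suc j) - q * (\<tau> - T)))"
    have l1: "g1 t \<le> h1 t" if "T \<le> t" for t
    proof (rule cmp[where f = g1 and f' = "\<lambda>\<tau>. r * \<gamma> * ((\<tau> - T)^j - q)"
          and g = h1 and g' = "\<lambda>\<tau>. r * h2 \<tau>" and c = 0 and T = T])
      show "T \<le> t" by fact
      show "(g1 has_real_derivative r * \<gamma> * ((\<tau> - T)^j - q)) (at \<tau>)" for \<tau>
      proof -
        have "((\<lambda>\<tau>. r * \<gamma> * ((\<tau> - T)^(Suc j) / real (Suc j) - q * (\<tau> - T))) has_real_derivative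
            r * \<gamma> * (real (Suc j) * (\<tau> - T)^(Suc j - 1) / real (Suc j) - q * (1 - 0))) (at \<tau>)"
          by (intro DERIV_cmult DERIV_diff DERIV_cdivide dpowT DERIV_ident DERIV_const)
        thus ?thesis unfolding g1_def by simp
      qed
      show "(h1 has_real_derivative r * h2 \<tau>) (at \<tau>)" for \<tau> by (rule dh1)
      show "r * \<gamma> * ((\<tau> - T)^j - q) + 0 * g1 \<tau> \<le> r * h2 \<tau> + 0 * h1 \<tau>" if "T \<le> \<tau>" for \<tau>
        using l2[OF that] r by (simp add: mult.assoc mult_left_mono)
      show "g1 T \<le> h1 T" unfolding g1_def using h1nn[OF T] by simp
    qed
    define R where "R = 2 * real (Suc j) * q + 1"
    have R1: "1 \<le> R" unfolding R_def using q by simp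
    define \<beta>' where "\<beta>' = r * \<gamma> / (2 * real (Suc j))"
    have b': "0 < \<beta>'" unfolding \<beta>'_def using r \<gamma> by simp
    have "\<beta>' * (t - (T + R))^(Suc j) \<le> h1 t" if "T + R \<le> t" for t
    proof -
      define s where "s = t - T"
      have sR: "R \<le> s" unfolding s_def using that by simp
      have s1: "1 \<le> s" using sR R1 by simp
      have "s \<le> s^j" using s1 Suc power_increasing[of 1 j s] by simp
      hence "2 * real (Suc j) * q \<le> s^j" using sR unfolding R_def by simp
      hence "2 * real (Suc j) * q * s \<le> s^j * s" using s1 by (intro mult_right_mono) auto
      hence key: "q * s \<le> s^(Suc j) / (2 * real (Suc j))" by (simp add: field_simps)
      have "\<beta>' * (t - (T + R))^(Suc j) \<le> \<beta>' * s^(Suc j)"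
        using b' that R1 unfolding s_def by (intro mult_left_mono power_mono) auto
      also have "\<dots> = r * \<gamma> * (s^(Suc j) / real (Suc j) - s^(Suc j) / (2 * real (Suc j)))"
      proof -
        have gen: "A / m - A / (2 * m) = A / (2 * m)" if "m \<noteq> 0" for A m :: real
          using that by (simp add: field_simps)
        show ?thesis unfolding \<beta>'_def gen[OF of_nat_neq_0] by simp
      qed
      also have "\<dots> \<le> r * \<gamma> * (s^(Suc j) / real (Suc j) - q * s)"
        using key r \<gamma> by (intro mult_left_mono) auto
      also have "\<dots> = g1 t" unfolding g1_def s_def ..
      also have "\<dots> \<le> h1 t" using l1 that R1 by simp
      finally show ?thesis .
    qed
    thus ?thesis using T R1 b' unfolding h1_def
      by (intro exI[of _ "T+R"] exI[of _ \<beta>']) auto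
  qed
qed

lemma lim_inv: "((\<lambda>t::real. K / (t - T)) \<longlongrightarrow> 0) at_top"
proof -
  have "filterlim (\<lambda>t::real. - T + t) at_top at_top"
    by (rule filterlim_tendsto_add_at_top[OF tendsto_const filterlim_ident])
  hence "filterlim (\<lambda>t::real. t - T) at_infinity at_top"
    by (intro filterlim_at_top_imp_at_infinity) simp
  thus ?thesis by (rule tendsto_divide_0[OF tendsto_const])
qed

lemma lower_all:
  assumes N: "N \<ge> 1" and supp: "set_pmf \<mu> \<subseteq> MT_transient N" and u0: "(a,y0) \<in> set_pmf \<mu>"
  shows "j \<le> a \<Longrightarrow> \<exists>T \<beta>. 0 \<le> T \<and> 0 < \<beta> \<and> (\<forall>t\<ge>T. \<beta> * (t-T)^j \<le> hh N \<mu> (a-j,1) t)"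
proof (induction j)
  case 0
  then show ?case using lower_a[OF N supp u0] by simp
next
  case (Suc j)
  have aN: "a \<le> N"
  proof -
    have "(a,y0) \<in> MT_transient N" using u0 supp by blast
    thus ?thesis unfolding trans_iff by auto
  qed
  obtain T \<beta> where Tb: "0 \<le> T" "0 < \<beta>" "\<And>t. t \<ge> T \<Longrightarrow> \<beta> * (t-T)^j \<le> hh N \<mu> (a-j,1) t"
    using Suc by auto
  have e: "a - Suc j + 1 = a - j" using Suc.prems by simp
  show ?case
    by (rule lower_step[OF N supp _ aN Tb(1,2)]) (use Suc.prems Tb(3) e in auto)
qed

lemma ratio0:
  assumes N: "N \<ge> 1" and supp: "set_pmf \<mu> \<subseteq> MT_transient N"
  obtains T \<beta> a where "0 \<le> T" "0 < \<beta>" "\<And>t. t \<ge> T \<Longrightarrow> \<beta> * (t-T)^a \<le> hh N \<mu> (0,1) t"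
    and "\<And>s. s \<in> MT_transient N \<Longrightarrow> s \<noteq> (0,1) \<Longrightarrow>
        \<exists>K. \<forall>t\<ge>2*T+1. hh N \<mu> s t / hh N \<mu> (0,1) t \<le> K / (t - T)"
proof -
  define a where "a = Max (fst ` set_pmf \<mu>)"
  have fin: "finite (set_pmf \<mu>)" using supp transient_finite finite_subset by blast
  have "a \<in> fst ` set_pmf \<mu>" unfolding a_def using fin set_pmf_not_empty by (intro Max_in) auto
  then obtain y0 where u0: "(a,y0) \<in> set_pmf \<mu>" by force
  have amax: "\<And>s. s \<in> set_pmf \<mu> \<Longrightarrow> fst s \<le> a" unfolding a_def using fin by simp
  have aN: "a \<le> N"
  proof -
    have "(a,y0) \<in> MT_transient N" using u0 supp by blast
    thus ?thesis unfolding trans_iff by auto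
  qed
  obtain T \<beta> where Tb: "0 \<le> T" "0 < \<beta>" "\<And>t. t \<ge> T \<Longrightarrow> \<beta> * (t-T)^a \<le> hh N \<mu> (0,1) t"
    using lower_all[OF N supp u0 order_refl] by auto
  have ub: "\<exists>K. \<forall>t\<ge>2*T+1. hh N \<mu> s t / hh N \<mu> (0,1) t \<le> K / (t - T)"
    if s: "s \<in> MT_transient N" "s \<noteq> (0,1)" for s
  proof -
    obtain x y where xy: "s = (x,y)" by (cases s)
    have Sxy: "(x,y) \<in> MT_transient N" using s xy by simp
    have y1: "1 \<le> y" using Sxy unfolding trans_iff by auto
    obtain C where C: "C \<ge> 0" "\<And>t. t \<ge> 0 \<Longrightarrow> 0 \<le> hh N \<mu> (x,y) t \<and> hh N \<mu> (x,y) t \<le> C * bnd N a x y t"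
      using upper[OF N supp amax Sxy] unfolding UB_def by blast
    show ?thesis
    proof (intro exI[of _ "2^(a+1) * C / \<beta>"] allI impI)
      fix t :: real assume t: "2*T+1 \<le> t"
      have tT: "0 < t - T" using t Tb(1) by simp
      have t0: "0 \<le> t" using t Tb(1) by simp
      have hl: "\<beta> * (t-T)^a \<le> hh N \<mu> (0,1) t" using Tb(3) t Tb(1) by simp
      have hlpos: "0 < \<beta> * (t-T)^a" using Tb(2) tT by simp
      have bb: "bnd N a x y t \<le> 2^(a+1) / (t - T) * (t-T)^a"
      proof (cases "a = 0")
        case True
        have "bnd N a x y t \<le> exp (- (real N * t / 2))"
          using True xy s y1 t0 unfolding bnd_def by auto
        also have "\<dots> \<le> 2 / (t - T)"
        proof -
          have "1 + real N * t / 2 \<le> exp (real N * t / 2)" by (rule exp_ge_add_one_self)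
          moreover have "t - T \<le> 2 * (1 + real N * t / 2)"
          proof -
            have "t \<le> real N * t" using N t0 mult_right_mono[of 1 "real N" t] by simp
            thus ?thesis using Tb(1) by simp
          qed
          ultimately have "t - T \<le> 2 * exp (real N * t / 2)"
            by (meson mult_left_mono order_trans zero_le_numeral)
          hence "(t - T) * exp (- (real N * t / 2)) \<le> 2"
            by (simp add: exp_minus field_simps)
          thus ?thesis using tT by (simp add: field_simps)
        qed
        finally show ?thesis using True by simp
      next
        case False
        have "bnd N a x y t \<le> (1+t)^(a-1)"
        proof -
          have e: "exp (- (real N * t / 2)) \<le> 1" using t0 by simp
          have p1: "1 \<le> (1+t)^k" for k using t0 by simp
          have pm: "(1+t)^k \<le> (1+t)^m" if "k \<le> m" for k m using t0 that by (intro power_increasing) auto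
          have x0: "x \<noteq> 0 \<or> y \<noteq> 1" using xy s by auto
          show ?thesis unfolding bnd_def
            using order_trans[OF e p1[of "a-1"]] p1[of "a-1"] pm[of "a-x" "a-1"] pm[of "a-x-1" "a-1"] x0 False by auto
        qed
        also have "\<dots> \<le> (2*(t-T))^(a-1)"
          using t t0 by (intro power_mono) auto
        also have "\<dots> = 2^(a-1) * (t-T)^(a-1)" by (rule power_mult_distrib)
        also have "\<dots> \<le> 2^(a+1) / (t - T) * (t-T)^a"
        proof -
          have "(t-T)^a = (t-T) * (t-T)^(a-1)" using False by (metis power_eq_if)
          moreover have "(2::real)^(a-1) \<le> 2^(a+1)" by (intro power_increasing) auto
          ultimately show ?thesis using tT by (simp add: mult_right_mono)
        qed
        finally show ?thesis .
      qed
      have "hh N \<mu> s t / hh N \<mu> (0,1) t \<le> C * bnd N a x y t / (\<beta> * (t-T)^a)"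
        using C(2)[OF t0] xy hl hlpos by (intro frac_le) auto
      also have "\<dots> \<le> C * (2^(a+1) / (t - T) * (t-T)^a) / (\<beta> * (t-T)^a)"
        using bb C(1) hlpos by (intro divide_right_mono mult_left_mono) auto
      also have "\<dots> = 2^(a+1) * C / \<beta> / (t - T)"
        using hlpos Tb(2) tT by (simp add: field_simps)
      finally show "hh N \<mu> s t / hh N \<mu> (0,1) t \<le> 2^(a+1) * C / \<beta> / (t - T)" .
    qed
  qed
  show ?thesis by (rule that[OF Tb ub])
qed

lemma yaglom:
  assumes N: "N \<ge> 1" and supp: "set_pmf \<mu> \<subseteq> MT_transient N" and s: "s \<in> MT_transient N"
  shows "((\<lambda>t. MT_cond N \<mu> t {s}) \<longlongrightarrow> pmf (return_pmf (0, 1)) s) at_top"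
proof -
  obtain T \<beta> a where Tb: "0 \<le> T" "0 < \<beta>" "\<And>t. t \<ge> T \<Longrightarrow> \<beta> * (t-T)^a \<le> hh N \<mu> (0,1) t"
    and ub: "\<And>s. s \<in> MT_transient N \<Longrightarrow> s \<noteq> (0,1) \<Longrightarrow>
        \<exists>K. \<forall>t\<ge>2*T+1. hh N \<mu> s t / hh N \<mu> (0,1) t \<le> K / (t - T)"
    using ratio0[OF N supp] by blast
  define H where "H = (\<lambda>t. \<Sum>s'\<in>MT_transient N. hh N \<mu> s' t)"
  have S01: "(0,1) \<in> MT_transient N" by (rule one_in_S[OF N])
  have cond_eq: "MT_cond N \<mu> t {s'} = hh N \<mu> s' t / H t" for t s'
  proof -
    have "H t = exp (real N * t) * MT_surv N \<mu> t"
      unfolding H_def hh_def MT_surv_def sum_distrib_left ..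
    thus ?thesis unfolding MT_cond_def hh_def by simp
  qed
  have ev: "\<forall>\<^sub>F t in at_top. 2*T+1 \<le> t" by (rule eventually_ge_at_top)
  have pos01: "0 < hh N \<mu> (0,1) t" if "2*T+1 \<le> t" for t
  proof -
    have "0 < \<beta> * (t-T)^a" using Tb(1,2) that by simp
    thus ?thesis using Tb(3)[of t] that Tb(1) by simp
  qed
  have Hge: "hh N \<mu> (0,1) t \<le> H t" if "0 \<le> t" for t
    unfolding H_def by (rule member_le_sum[OF S01]) (use hnn[OF N supp _ that] transient_finite in auto)
  have r0: "((\<lambda>t. hh N \<mu> s' t / H t) \<longlongrightarrow> 0) at_top" if s': "s' \<in> MT_transient N" "s' \<noteq> (0,1)" for s'
  proof -
    obtain K where K: "\<And>t. t \<ge> 2*T+1 \<Longrightarrow> hh N \<mu> s' t / hh N \<mu> (0,1) t \<le> K / (t - T)"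
      using ub[OF s'] by blast
    show ?thesis
    proof (rule tendsto_sandwich[where f = "\<lambda>_. 0" and h = "\<lambda>t. K / (t - T)"])
      show "\<forall>\<^sub>F t in at_top. 0 \<le> hh N \<mu> s' t / H t"
        using ev
      proof eventually_elim
        case (elim t)
        have t0: "0 \<le> t" using elim Tb(1) by simp
        show ?case using hnn[OF N supp s'(1) t0] Hge[OF t0] pos01[OF elim] by simp
      qed
      show "\<forall>\<^sub>F t in at_top. hh N \<mu> s' t / H t \<le> K / (t - T)"
        using ev
      proof eventually_elim
        case (elim t)
        have t0: "0 \<le> t" using elim Tb(1) by simp
        have "hh N \<mu> s' t / H t \<le> hh N \<mu> s' t / hh N \<mu> (0,1) t"
          using hnn[OF N supp s'(1) t0] Hge[OF t0] pos01[OF elim] by (intro divide_left_mono) auto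
        thus ?case using K[OF elim] by linarith
      qed
      show "((\<lambda>_. 0::real) \<longlongrightarrow> 0) at_top" by simp
      show "((\<lambda>t. K / (t - T)) \<longlongrightarrow> 0) at_top" by (rule lim_inv)
    qed
  qed
  show ?thesis
  proof (cases "s = (0,1)")
    case False
    have "pmf (return_pmf (0, 1)) s = 0" using False by (simp add: pmf_return)
    thus ?thesis unfolding cond_eq using r0[OF s False] by simp
  next
    case True
    define R where "R = MT_transient N - {(0,1)}"
    have finR: "finite R" unfolding R_def using transient_finite by simp
    have lim: "((\<lambda>t. 1 - (\<Sum>s'\<in>R. hh N \<mu> s' t / H t)) \<longlongrightarrow> 1 - 0) at_top"
      by (intro tendsto_diff tendsto_const tendsto_null_sum r0) (auto simp: R_def)
    have "\<forall>\<^sub>F t in at_top. 1 - (\<Sum>s'\<in>R. hh N \<mu> s' t / H t) = MT_cond N \<mu> t {s}"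
      using ev
    proof eventually_elim
      case (elim t)
      have t0: "0 \<le> t" using elim Tb(1) by simp
      have Hpos: "0 < H t" using Hge[OF t0] pos01[OF elim] by simp
      have "H t = hh N \<mu> (0,1) t + (\<Sum>s'\<in>R. hh N \<mu> s' t)"
        unfolding H_def R_def by (rule sum.remove[OF transient_finite S01])
      hence "hh N \<mu> (0,1) t / H t = 1 - (\<Sum>s'\<in>R. hh N \<mu> s' t) / H t"
        using Hpos by (simp add: field_simps)
      thus ?case unfolding cond_eq True sum_divide_distrib by simp
    qed
    hence "((\<lambda>t. MT_cond N \<mu> t {s}) \<longlongrightarrow> 1) at_top" using lim tendsto_cong by fastforce
    thus ?thesis using True by (simp add: pmf_return)
  qed
qed

theorem mainTheorem1:
  fixes N :: nat
  assumes "N \<ge> 1"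
  shows "(\<exists>!\<nu>. MT_QSD N \<nu>) \<and> MT_QSD N (return_pmf (0, 1)) \<and>
    (\<forall>\<mu>. set_pmf \<mu> \<subseteq> MT_transient N \<longrightarrow>
       (\<forall>s\<in>MT_transient N.
          ((\<lambda>t. MT_cond N \<mu> t {s}) \<longlongrightarrow> pmf (return_pmf (0, 1)) s) at_top))"
  using QSD01[OF assms] QSD_unique[OF assms] yaglom[OF assms] by blast

end
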